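(* The map $\psi\colon G/M\to\mathfrak P$, $gM\mapsto(g\omega_-,g\omega_+,go)$, is a homeomorphism.
   Context: Let $q\ge2$ and $\mathfrak G=(\mathfrak X,\mathfrak E)$ the $(q+1)$-regular tree with vertex set $\mathfrak X$ (discrete) and graph distance $d$. The boundary $\Omega$ is the set of infinite non-backtracking edge chains modulo "eventually equal up to shift", with the topology generated by the sets $\partial_+\vec e$ of classes of chains starting with the directed edge $\vec e$. For $\omega_1\ne\omega_2$ in $\Omega$, $]\omega_1,\omega_2[$ denotes the vertex set of the geodesic joining them. Fix a vertex $o$ and $\omega_-\neq\omega_+$ in $\Omega$ with $o\in]\omega_-,\omega_+[$. $G=\mathrm{Aut}(\mathfrak G)$ carries the topology of pointwise convergence on $\mathfrak X$ (basic neighbourhoods $\{h:hx=g_0x\ \forall x\in F\}$, $F\subseteq\mathfrak X$ finite) and acts on $\Omega$. $M=\{\gamma\in G:\gamma$ fixes every vertex of $]\omega_-,\omega_+[\}$ (a subgroup of $\mathrm{Stab}_G(o)$); $G/M$ has the quotient topology. $\mathfrak P$ is the set of triples $(\omega_1,\omega_2,x)\in\Omega\times\Omega\times\mathfrak X$ with $\omega_1\ne\omega_2$ and $x\in]\omega_1,\omega_2[$, with the subspace topology. *)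

theory Defs
  imports "HOL-Analysis.Analysis"
begin

definition nb_walk :: "('v \<Rightarrow> 'v \<Rightarrow> bool) \<Rightarrow> 'v list \<Rightarrow> bool" where
  "nb_walk E xs \<longleftrightarrow> xs \<noteq> [] \<and>
     (\<forall>i. Suc i < length xs \<longrightarrow> E (xs ! i) (xs ! Suc i)) \<and>
     (\<forall>i. Suc (Suc i) < length xs \<longrightarrow> xs ! i \<noteq> xs ! Suc (Suc i))"

text \<open>(q+1)-regular tree on the whole type 'v: symmetric, irreflexive, every vertex has
  exactly q+1 neighbours, and any two vertices are joined by a unique non-backtracking walk
  (i.e. connected and without cycles).\<close>

definition regular_tree :: "nat \<Rightarrow> ('v \<Rightarrow> 'v \<Rightarrow> bool) \<Rightarrow> bool" where
  "regular_tree q E \<longleftrightarrow>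
     (\<forall>x y. E x y \<longrightarrow> E y x) \<and> (\<forall>x. \<not> E x x) \<and>
     (\<forall>x. finite {y. E x y} \<and> card {y. E x y} = q + 1) \<and>
     (\<forall>x y. \<exists>!xs. nb_walk E xs \<and> hd xs = x \<and> last xs = y)"

definition ray :: "('v \<Rightarrow> 'v \<Rightarrow> bool) \<Rightarrow> (nat \<Rightarrow> 'v) \<Rightarrow> bool" where
  "ray E r \<longleftrightarrow> (\<forall>n. E (r n) (r (Suc n))) \<and> (\<forall>n. r (Suc (Suc n)) \<noteq> r n)"

definition ray_equiv :: "('v \<Rightarrow> 'v \<Rightarrow> bool) \<Rightarrow> ((nat \<Rightarrow> 'v) \<times> (nat \<Rightarrow> 'v)) set" where
  "ray_equiv E = {(r, s). ray E r \<and> ray E s \<and> (\<exists>k l. \<forall>n. r (n + k) = s (n + l))}"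

definition boundary :: "('v \<Rightarrow> 'v \<Rightarrow> bool) \<Rightarrow> (nat \<Rightarrow> 'v) set set" where
  "boundary E = {r. ray E r} // ray_equiv E"

definition bd_shadow :: "('v \<Rightarrow> 'v \<Rightarrow> bool) \<Rightarrow> 'v \<Rightarrow> 'v \<Rightarrow> (nat \<Rightarrow> 'v) set set" where
  "bd_shadow E x y = {\<omega> \<in> boundary E. \<exists>r\<in>\<omega>. r 0 = x \<and> r 1 = y}"

definition boundary_top :: "('v \<Rightarrow> 'v \<Rightarrow> bool) \<Rightarrow> (nat \<Rightarrow> 'v) set topology" where
  "boundary_top E = topology_generated_by ((\<lambda>(x, y). bd_shadow E x y) ` {(x, y). E x y})"

definition bi_line :: "('v \<Rightarrow> 'v \<Rightarrow> bool) \<Rightarrow> (int \<Rightarrow> 'v) \<Rightarrow> bool" where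
  "bi_line E l \<longleftrightarrow> (\<forall>i. E (l i) (l (i + 1))) \<and> (\<forall>i. l (i + 2) \<noteq> l i)"

definition geod :: "('v \<Rightarrow> 'v \<Rightarrow> bool) \<Rightarrow> (nat \<Rightarrow> 'v) set \<Rightarrow> (nat \<Rightarrow> 'v) set \<Rightarrow> 'v set" where
  "geod E \<omega>1 \<omega>2 = {x. \<exists>l. bi_line E l \<and> (\<lambda>n. l (- int n)) \<in> \<omega>1 \<and> (\<lambda>n. l (int n)) \<in> \<omega>2
                            \<and> x \<in> range l}"

definition Aut :: "('v \<Rightarrow> 'v \<Rightarrow> bool) \<Rightarrow> ('v \<Rightarrow> 'v) set" where
  "Aut E = {g. bij g \<and> (\<forall>x y. E (g x) (g y) \<longleftrightarrow> E x y)}"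

text \<open>Topology of pointwise convergence (the vertex set being discrete).\<close>

definition Aut_top :: "('v \<Rightarrow> 'v \<Rightarrow> bool) \<Rightarrow> ('v \<Rightarrow> 'v) topology" where
  "Aut_top E = topology_generated_by
     {{h \<in> Aut E. \<forall>x\<in>F. h x = g0 x} | g0 F. g0 \<in> Aut E \<and> finite F}"

definition bd_act :: "('v \<Rightarrow> 'v) \<Rightarrow> (nat \<Rightarrow> 'v) set \<Rightarrow> (nat \<Rightarrow> 'v) set" where
  "bd_act g \<omega> = (\<lambda>r. g \<circ> r) ` \<omega>"

definition quot_top :: "'a topology \<Rightarrow> ('a \<Rightarrow> 'b) \<Rightarrow> 'b topology" where
  "quot_top X f = topology (\<lambda>U. U \<subseteq> f ` topspace X \<and> openin X {x \<in> topspace X. f x \<in> U})"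

definition Mgrp :: "('v \<Rightarrow> 'v \<Rightarrow> bool) \<Rightarrow> (nat \<Rightarrow> 'v) set \<Rightarrow> (nat \<Rightarrow> 'v) set \<Rightarrow> ('v \<Rightarrow> 'v) set" where
  "Mgrp E \<omega>m \<omega>p = {\<gamma> \<in> Aut E. \<forall>x\<in>geod E \<omega>m \<omega>p. \<gamma> x = x}"

definition lcoset :: "('v \<Rightarrow> 'v) \<Rightarrow> ('v \<Rightarrow> 'v) set \<Rightarrow> ('v \<Rightarrow> 'v) set" where
  "lcoset g H = (\<lambda>m. g \<circ> m) ` H"

definition GmodM_top :: "('v \<Rightarrow> 'v \<Rightarrow> bool) \<Rightarrow> (nat \<Rightarrow> 'v) set \<Rightarrow> (nat \<Rightarrow> 'v) set \<Rightarrow> ('v \<Rightarrow> 'v) set topology" where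
  "GmodM_top E \<omega>m \<omega>p = quot_top (Aut_top E) (\<lambda>g. lcoset g (Mgrp E \<omega>m \<omega>p))"

definition Pset :: "('v \<Rightarrow> 'v \<Rightarrow> bool) \<Rightarrow> ((nat \<Rightarrow> 'v) set \<times> (nat \<Rightarrow> 'v) set \<times> 'v) set" where
  "Pset E = {(\<omega>1, \<omega>2, x). \<omega>1 \<in> boundary E \<and> \<omega>2 \<in> boundary E \<and> \<omega>1 \<noteq> \<omega>2 \<and> x \<in> geod E \<omega>1 \<omega>2}"

definition P_top :: "('v \<Rightarrow> 'v \<Rightarrow> bool) \<Rightarrow> ((nat \<Rightarrow> 'v) set \<times> (nat \<Rightarrow> 'v) set \<times> 'v) topology" where
  "P_top E = subtopology (prod_topology (boundary_top E)
                 (prod_topology (boundary_top E) (discrete_topology UNIV))) (Pset E)"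

text \<open>\<open>\<psi>(gM) = (g\<omega>-, g\<omega>+, go)\<close>, computed with any representative g of the coset.\<close>

definition psi :: "('v \<Rightarrow> 'v) set \<Rightarrow> 'v \<Rightarrow> (nat \<Rightarrow> 'v) set \<Rightarrow> (nat \<Rightarrow> 'v) set \<Rightarrow> ('v \<Rightarrow> 'v) set
     \<Rightarrow> (nat \<Rightarrow> 'v) set \<times> (nat \<Rightarrow> 'v) set \<times> 'v" where
  "psi G v0 \<omega>m \<omega>p C = (let g = (SOME g. g \<in> G \<and> g \<in> C) in (bd_act g \<omega>m, bd_act g \<omega>p, g v0))"

end

theory Submission
  imports Defs
begin

locale rtree =
  fixes q :: nat and E :: "'v \<Rightarrow> 'v \<Rightarrow> bool"
  assumes rt: "regular_tree q E"
begin

lemma symE: "E x y \<Longrightarrow> E y x" using rt unfolding regular_tree_def by blast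
lemma irrE: "\<not> E x x" using rt unfolding regular_tree_def by blast
lemma fin_nb: "finite {y. E x y}" using rt unfolding regular_tree_def by blast
lemma card_nb: "card {y. E x y} = q + 1" using rt unfolding regular_tree_def by blast
lemma walk_ex1: "\<exists>!xs. nb_walk E xs \<and> hd xs = x \<and> last xs = y" using rt unfolding regular_tree_def by blast
lemma walk_unique: "nb_walk E xs \<Longrightarrow> nb_walk E ys \<Longrightarrow> hd xs = hd ys \<Longrightarrow> last xs = last ys \<Longrightarrow> xs = ys"
  using walk_ex1[of "hd xs" "last xs"] by metis

lemma nb_walk_Cons: "nb_walk E (z # xs) \<longleftrightarrow> xs = [] \<or> (nb_walk E xs \<and> E z (hd xs) \<and> (Suc 0 < length xs \<longrightarrow> z \<noteq> xs ! 1))"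
proof (cases xs)
  case Nil then show ?thesis by (simp add: nb_walk_def)
next
  case (Cons a ys)
  show ?thesis
  proof
    assume H: "nb_walk E (z # xs)"
    have "nb_walk E xs" unfolding nb_walk_def
    proof (intro conjI allI impI)
      show "xs \<noteq> []" using Cons by simp
    next
      fix i assume "Suc i < length xs" then show "E (xs ! i) (xs ! Suc i)"
        using H[unfolded nb_walk_def] by (metis Suc_less_eq length_Cons nth_Cons_Suc)
    next
      fix i assume "Suc (Suc i) < length xs" then show "xs ! i \<noteq> xs ! Suc (Suc i)"
        using H[unfolded nb_walk_def] by (metis Suc_less_eq length_Cons nth_Cons_Suc)
    qed
    moreover have "E z (hd xs)" using H[unfolded nb_walk_def, THEN conjunct2, THEN conjunct1, rule_format, of 0] Cons by simp
    moreover have "Suc 0 < length xs \<longrightarrow> z \<noteq> xs ! 1"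
      using H[unfolded nb_walk_def, THEN conjunct2, THEN conjunct2, rule_format, of 0] Cons by auto
    ultimately show "xs = [] \<or> (nb_walk E xs \<and> E z (hd xs) \<and> (Suc 0 < length xs \<longrightarrow> z \<noteq> xs ! 1))" by blast
  next
    assume H: "xs = [] \<or> (nb_walk E xs \<and> E z (hd xs) \<and> (Suc 0 < length xs \<longrightarrow> z \<noteq> xs ! 1))"
    then have H: "nb_walk E xs" "E z (hd xs)" "Suc 0 < length xs \<longrightarrow> z \<noteq> xs ! 1" using Cons by auto
    show "nb_walk E (z # xs)" unfolding nb_walk_def
    proof (intro conjI allI impI)
      fix i assume "Suc i < length (z # xs)" then show "E ((z # xs) ! i) ((z # xs) ! Suc i)"
        using H Cons unfolding nb_walk_def by (cases i) auto
    next
      fix i assume "Suc (Suc i) < length (z # xs)" then show "(z # xs) ! i \<noteq> (z # xs) ! Suc (Suc i)"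
        using H Cons unfolding nb_walk_def by (cases i) auto
    qed simp
  qed
qed

lemma ray_walk: "ray E r \<Longrightarrow> nb_walk E (map r [0..<Suc N])"
  unfolding nb_walk_def ray_def by (auto simp: nth_map nth_upt simp del: upt_Suc) metis

lemma nb_walk_single[simp]: "nb_walk E [x]" by (simp add: nb_walk_def)
lemma nb_walk_ne: "nb_walk E xs \<Longrightarrow> xs \<noteq> []" by (simp add: nb_walk_def)

definition pth :: "'v \<Rightarrow> 'v \<Rightarrow> 'v list" where
  "pth b v = (THE xs. nb_walk E xs \<and> hd xs = v \<and> last xs = b)"

lemma pth: "nb_walk E (pth b v)" "hd (pth b v) = v" "last (pth b v) = b"
  using theI'[OF walk_ex1[of v b]] unfolding pth_def by auto

lemma pth_eq: "nb_walk E xs \<Longrightarrow> hd xs = v \<Longrightarrow> last xs = b \<Longrightarrow> pth b v = xs"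
  using walk_unique pth by metis

lemma pth_ne: "pth b v \<noteq> []" using pth(1) nb_walk_ne by blast

lemma pth_self: "pth b b = [b]" by (rule pth_eq) auto

definition ch :: "'v list \<Rightarrow> 'v set" where
  "ch xs = {z. E (hd xs) z \<and> (Suc 0 < length xs \<longrightarrow> z \<noteq> xs ! 1)}"

lemma nb_walk_Cons2: "xs \<noteq> [] \<Longrightarrow> nb_walk E (z # xs) \<longleftrightarrow> nb_walk E xs \<and> z \<in> ch xs"
  unfolding nb_walk_Cons ch_def using symE by blast

lemma nb_walk_tl: "nb_walk E (z # xs) \<Longrightarrow> xs \<noteq> [] \<Longrightarrow> nb_walk E xs"
  using nb_walk_Cons2 by blast

lemma pth_Cons: "pth b v = v # xs \<Longrightarrow> xs \<noteq> [] \<Longrightarrow> pth b (hd xs) = xs \<and> v \<in> ch xs"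
proof -
  assume a: "pth b v = v # xs" "xs \<noteq> []"
  have "nb_walk E (v # xs)" using pth(1)[of b v] a by simp
  then have "nb_walk E xs" "v \<in> ch xs" using nb_walk_Cons2 a by auto
  moreover have "last xs = b" using pth(3)[of b v] a by simp
  ultimately show ?thesis using pth_eq by blast
qed

lemma edge_pth: assumes "E u v" shows "pth b v = v # pth b u \<or> pth b u = u # pth b v"
proof (cases "Suc 0 < length (pth b u) \<and> pth b u ! 1 = v")
  case True
  obtain x ys where xy: "pth b u = x # ys" using pth_ne by (cases "pth b u") auto
  have x: "x = u" using pth(2)[of b u] xy by simp
  have ys: "ys \<noteq> []" "hd ys = v" using True xy by (auto simp: hd_conv_nth)
  have "pth b v = ys" using pth_Cons[of b u ys] xy x ys by simp
  then show ?thesis using xy x by simp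
next
  case False
  have "nb_walk E (v # pth b u)"
    using nb_walk_Cons2[OF pth_ne] pth[of b u] False assms symE unfolding ch_def by auto
  then have "pth b v = v # pth b u" by (rule pth_eq) (auto simp: pth pth_ne)
  then show ?thesis by simp
qed

lemma card_ch: assumes "nb_walk E xs"
  shows "finite (ch xs)" "card (ch xs) = (if length xs = 1 then q + 1 else q)"
proof -
  have sub: "ch xs \<subseteq> {y. E (hd xs) y}" unfolding ch_def by auto
  then show "finite (ch xs)" using fin_nb finite_subset by blast
  show "card (ch xs) = (if length xs = 1 then q + 1 else q)"
  proof (cases "length xs = 1")
    case True
    then have "ch xs = {y. E (hd xs) y}" unfolding ch_def by auto
    then show ?thesis using True card_nb by simp
  next
    case False
    then have L: "Suc 0 < length xs" using nb_walk_ne[OF assms] by (cases xs) auto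
    then have eq: "ch xs = {y. E (hd xs) y} - {xs ! 1}" unfolding ch_def by auto
    have "E (hd xs) (xs ! 1)" using assms L unfolding nb_walk_def by (auto simp: hd_conv_nth)
    then show ?thesis using eq False card_nb fin_nb by simp
  qed
qed

end

fun gm :: "'v \<Rightarrow> ('v list \<Rightarrow> 'v list \<Rightarrow> 'v \<Rightarrow> 'v) \<Rightarrow> 'v list \<Rightarrow> 'v list" where
  "gm b' st [] = []"
| "gm b' st [x] = [b']"
| "gm b' st (z # x # xs) = st (x # xs) (gm b' st (x # xs)) z # gm b' st (x # xs)"

locale extn = rtree q E for q and E :: "'v \<Rightarrow> 'v \<Rightarrow> bool" +
  fixes b b' :: 'v and st :: "'v list \<Rightarrow> 'v list \<Rightarrow> 'v \<Rightarrow> 'v"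
  assumes A: "\<And>xs ys. nb_walk E xs \<Longrightarrow> last xs = b \<Longrightarrow> nb_walk E ys \<Longrightarrow> last ys = b'
     \<Longrightarrow> length xs = length ys \<Longrightarrow> bij_betw (st xs ys) (ch xs) (ch ys)"
begin

lemma G1: "nb_walk E xs \<Longrightarrow> last xs = b \<Longrightarrow>
   nb_walk E (gm b' st xs) \<and> last (gm b' st xs) = b' \<and> length (gm b' st xs) = length xs"
proof (induction xs rule: induct_list012)
  case 1 then show ?case by (simp add: nb_walk_def)
next
  case (2 x) then show ?case by simp
next
  case (3 x y zs)
  have w: "nb_walk E (y # zs)" "x \<in> ch (y # zs)" using nb_walk_Cons2 3(3) by auto
  have l: "last (y # zs) = b" using 3(4) by simp
  have IH: "nb_walk E (gm b' st (y # zs))" "last (gm b' st (y # zs)) = b'"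
     "length (gm b' st (y # zs)) = length (y # zs)" using 3(2) w l by auto
  have ne: "gm b' st (y # zs) \<noteq> []" using IH(3) by auto
  have "st (y # zs) (gm b' st (y # zs)) x \<in> ch (gm b' st (y # zs))"
    using A[OF w(1) l IH(1) IH(2) IH(3)[symmetric]] w(2) bij_betwE by blast
  then show ?case using IH ne nb_walk_Cons2 by simp
qed

lemma G2: "nb_walk E xs \<Longrightarrow> last xs = b \<Longrightarrow> nb_walk E xs' \<Longrightarrow> last xs' = b \<Longrightarrow>
   gm b' st xs = gm b' st xs' \<Longrightarrow> xs = xs'"
proof (induction xs arbitrary: xs' rule: induct_list012)
  case 1 then show ?case by (simp add: nb_walk_def)
next
  case (2 x)
  have "gm b' st xs' = [b']" using 2(5) by simp
  then have "length xs' = 1" using G1[OF 2(3) 2(4)] by simp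
  then obtain x' where "xs' = [x']" by (cases xs') auto
  then show ?case using 2 by simp
next
  case (3 x y zs)
  have "length xs' = length (x # y # zs)" using G1[of "x # y # zs"] G1[of xs'] 3 by metis
  then obtain x' y' zs' where xs': "xs' = x' # y' # zs'" by (cases xs'; cases "tl xs'") auto
  have w: "nb_walk E (y # zs)" "x \<in> ch (y # zs)" using nb_walk_Cons2 3(3) by auto
  have w': "nb_walk E (y' # zs')" "x' \<in> ch (y' # zs')" using nb_walk_Cons2 3(5) xs' by auto
  have e: "st (y # zs) (gm b' st (y # zs)) x = st (y' # zs') (gm b' st (y' # zs')) x'"
    "gm b' st (y # zs) = gm b' st (y' # zs')" using 3(7) xs' by auto
  have yy: "y # zs = y' # zs'" using 3(2)[OF w(1) _ w'(1) _ e(2)] 3(4) 3(6) xs' by simp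
  have l: "last (y # zs) = b" using 3(4) by simp
  have G: "nb_walk E (gm b' st (y # zs))" "last (gm b' st (y # zs)) = b'"
     "length (gm b' st (y # zs)) = length (y # zs)" using G1 w l by auto
  have "inj_on (st (y # zs) (gm b' st (y # zs))) (ch (y # zs))"
    using A[OF w(1) l G(1) G(2) G(3)[symmetric]] bij_betw_def by blast
  then have "x = x'" using e(1) yy w w' inj_onD by metis
  then show ?case using xs' yy by simp
qed

lemma G3: "nb_walk E ys \<Longrightarrow> last ys = b' \<Longrightarrow> \<exists>xs. nb_walk E xs \<and> last xs = b \<and> gm b' st xs = ys"
proof (induction ys rule: induct_list012)
  case 1 then show ?case by (simp add: nb_walk_def)
next
  case (2 y) then show ?case by (intro exI[of _ "[b]"]) simp
next
  case (3 y y1 zs)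
  have w: "nb_walk E (y1 # zs)" "y \<in> ch (y1 # zs)" using nb_walk_Cons2 3(3) by auto
  obtain xs where xs: "nb_walk E xs" "last xs = b" "gm b' st xs = y1 # zs"
    using 3(2) w 3(4) by auto
  have G: "length (gm b' st xs) = length xs" using G1 xs by blast
  have "bij_betw (st xs (gm b' st xs)) (ch xs) (ch (gm b' st xs))"
    using A[OF xs(1) xs(2)] G1[OF xs(1) xs(2)] by simp
  then obtain z where z: "z \<in> ch xs" "st xs (gm b' st xs) z = y"
    using w(2) xs(3) unfolding bij_betw_def by force
  obtain x xs0 where xs0: "xs = x # xs0" using xs(1) nb_walk_ne by (cases xs) auto
  have "nb_walk E (z # xs)" using nb_walk_Cons2 xs z xs0 by auto
  moreover have "gm b' st (z # xs) = st xs (gm b' st xs) z # gm b' st xs" using xs0 by simp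
  then have "gm b' st (z # xs) = y # y1 # zs" using z xs by simp
  moreover have "last (z # xs) = b" using xs xs0 by simp
  ultimately show ?case by blast
qed

definition gext :: "'v \<Rightarrow> 'v" where "gext v = hd (gm b' st (pth b v))"

lemma G4: "gm b' st (pth b v) = pth b' (gext v)"
proof -
  have "nb_walk E (gm b' st (pth b v))" "last (gm b' st (pth b v)) = b'"
    using G1 pth by blast+
  then show ?thesis unfolding gext_def by (intro pth_eq[symmetric]) auto
qed

lemma gext_b: "gext b = b'" unfolding gext_def pth_self by simp

lemma gext_Cons: "pth b v = v # xs \<Longrightarrow> xs \<noteq> [] \<Longrightarrow> gext v = st xs (gm b' st xs) v"
  unfolding gext_def by (cases xs) auto

lemma gext_inj: "inj gext"
proof (rule injI)
  fix u v assume "gext u = gext v"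
  then have "gm b' st (pth b u) = gm b' st (pth b v)" using G4 by simp
  then have "pth b u = pth b v" using G2 pth by blast
  then show "u = v" using pth(2) by metis
qed

lemma gext_surj: "surj gext"
proof -
  { fix w
    obtain xs where xs: "nb_walk E xs" "last xs = b" "gm b' st xs = pth b' w"
      using G3 pth by blast
    have "pth b (hd xs) = xs" using pth_eq xs by blast
    then have "gext (hd xs) = w" unfolding gext_def using xs(3) pth(2) by simp
    then have "w \<in> range gext" by blast }
  then show ?thesis by blast
qed

lemma gext_edge1: assumes "pth b v = v # pth b u" shows "E (gext v) (gext u)"
proof -
  have "gm b' st (pth b v) = gext v # gm b' st (pth b u)"
    using assms pth_ne[of b u] gext_Cons[OF assms pth_ne] by (cases "pth b u") auto
  then have "pth b' (gext v) = gext v # pth b' (gext u)" using G4 by simp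
  then have "gext v \<in> ch (pth b' (gext u))" using pth_Cons pth_ne by metis
  then show ?thesis unfolding ch_def using pth(2) symE by simp
qed

lemma gext_edge2: assumes "pth b' (gext v) = gext v # pth b' (gext u)" shows "E v u"
proof -
  have "length (pth b v) = Suc (length (pth b' (gext u)))" using assms G1[OF pth(1) pth(3), of v] G4[of v] by simp
  then have L: "Suc 0 < length (pth b v)" using pth_ne[of b' "gext u"] by (simp add: length_greater_0_conv[symmetric] del: length_greater_0_conv)
  then obtain xs where xs: "pth b v = v # xs" "xs \<noteq> []" using pth(2)[of b v]
    by (cases "pth b v") auto
  have "gm b' st (pth b v) = gext v # gm b' st xs" using xs gext_Cons[OF xs] by (cases xs) auto
  then have "gm b' st xs = gm b' st (pth b u)" using G4 assms by simp
  moreover have "nb_walk E xs" "last xs = b" using pth_Cons[OF xs] pth[of b "hd xs"] by auto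
  ultimately have "xs = pth b u" using G2 pth by blast
  then have "v \<in> ch (pth b u)" using pth_Cons xs by metis
  then show ?thesis unfolding ch_def using pth(2) symE by simp
qed

lemma gext_Aut: "gext \<in> Aut E"
  unfolding Aut_def
proof (intro CollectI conjI allI)
  show "bij gext" using gext_inj gext_surj bij_def by blast
  fix x y show "E (gext x) (gext y) = E x y"
  proof
    assume "E (gext x) (gext y)"
    then show "E x y" using edge_pth[of "gext x" "gext y" b'] gext_edge2 symE by metis
  next
    assume "E x y"
    then show "E (gext x) (gext y)" using edge_pth[of x y b] gext_edge1 symE by metis
  qed
qed

end

lemma bij_extend:
  assumes "finite A" "finite B" "card A = card B" "R \<subseteq> A \<times> B"
    and sv: "\<And>a b b'. (a,b)\<in>R \<Longrightarrow> (a,b')\<in>R \<Longrightarrow> b = b'"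
    and iv: "\<And>a a' b. (a,b)\<in>R \<Longrightarrow> (a',b)\<in>R \<Longrightarrow> a = a'"
  shows "\<exists>f. bij_betw f A B \<and> (\<forall>(a,b)\<in>R. f a = b)"
proof -
  define D where "D = Domain R"
  define h where "h a = (THE b. (a,b)\<in>R)" for a
  have hR: "(a, h a) \<in> R" if "a \<in> D" for a
    using that sv unfolding D_def h_def by (metis Domain.cases theI)
  have hR2: "h a = b" if "(a,b) \<in> R" for a b
    using hR[of a] that sv unfolding D_def by blast
  have bD: "bij_betw h D (Range R)"
    unfolding bij_betw_def inj_on_def
  proof (intro conjI ballI impI)
    fix a a' assume "a \<in> D" "a' \<in> D" "h a = h a'"
    then show "a = a'" using hR iv by metis
  next
    show "h ` D = Range R" using hR hR2 unfolding D_def by force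
  qed
  have DA: "D \<subseteq> A" "Range R \<subseteq> B" using assms(4) unfolding D_def by auto
  have fD: "finite D" "finite (Range R)" using DA assms(1,2) finite_subset by blast+
  have "card D = card (Range R)" using bD bij_betw_same_card by blast
  then have "card (A - D) = card (B - Range R)"
    using DA fD assms(3) by (simp add: card_Diff_subset)
  then obtain f0 where f0: "bij_betw f0 (A - D) (B - Range R)"
    using finite_same_card_bij assms(1,2) by (metis finite_Diff)
  define f where "f a = (if a \<in> D then h a else f0 a)" for a
  have b1: "bij_betw f D (Range R)" using bD by (rule bij_betw_cong[THEN iffD1, rotated]) (simp add: f_def)
  have b2: "bij_betw f (A - D) (B - Range R)" using f0 by (rule bij_betw_cong[THEN iffD1, rotated]) (simp add: f_def)
  have "bij_betw f (D \<union> (A - D)) (Range R \<union> (B - Range R))"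
    by (rule bij_betw_combine[OF b1 b2]) auto
  moreover have "D \<union> (A - D) = A" "Range R \<union> (B - Range R) = B" using DA by auto
  ultimately have "bij_betw f A B" by simp
  moreover have "\<forall>(a,b)\<in>R. f a = b" using hR2 unfolding f_def D_def by auto
  ultimately show ?thesis by blast
qed

lemma hd_map_upt[simp]: "hd (map f [0..<Suc N]) = f 0" by (simp add: upt_conv_Cons del: upt_Suc)
lemma last_map_upt[simp]: "last (map f [0..<Suc N]) = f N" by (simp add: last_map del: upt_Suc)

declare upt_Suc[simp del]

context rtree begin

lemma line_ray_plus: assumes "bi_line E l" shows "ray E (\<lambda>n. l (a + int n))"
  unfolding ray_def
proof (intro conjI allI)
  fix n
  have "E (l (a + int n)) (l (a + int n + 1))" using assms unfolding bi_line_def by blast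
  then show "E (l (a + int n)) (l (a + int (Suc n)))" by (simp add: algebra_simps)
  have "l (a + int n + 2) \<noteq> l (a + int n)" using assms unfolding bi_line_def by blast
  then show "l (a + int (Suc (Suc n))) \<noteq> l (a + int n)" by (simp add: algebra_simps)
qed

lemma line_ray_minus: assumes "bi_line E l" shows "ray E (\<lambda>n. l (a - int n))"
  unfolding ray_def
proof (intro conjI allI)
  fix n
  have "E (l (a - int n - 1)) (l (a - int n - 1 + 1))" using assms unfolding bi_line_def by blast
  then have "E (l (a - int n - 1 + 1)) (l (a - int n - 1))" by (rule symE)
  then show "E (l (a - int n)) (l (a - int (Suc n)))" by (simp add: algebra_simps)
  have "l (a - int n - 2 + 2) \<noteq> l (a - int n - 2)" using assms unfolding bi_line_def by blast
  then show "l (a - int (Suc (Suc n))) \<noteq> l (a - int n)" by (simp add: algebra_simps)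
qed

lemma line_inj: assumes "bi_line E l" shows "inj l"
proof -
  have *: False if "l i = l j" "i < j" for i j
  proof -
    define N where "N = nat (j - i)"
    have w: "nb_walk E (map (\<lambda>n. l (i + int n)) [0..<Suc N])" using ray_walk line_ray_plus assms by blast
    have "i + int N = j" unfolding N_def using that(2) by simp
    then have "last (map (\<lambda>n. l (i + int n)) [0..<Suc N]) = l i" using that(1) by simp
    moreover have "hd (map (\<lambda>n. l (i + int n)) [0..<Suc N]) = l i" by simp
    ultimately have "map (\<lambda>n. l (i + int n)) [0..<Suc N] = [l i]" using walk_unique[OF w nb_walk_single] by simp
    then have "length (map (\<lambda>n. l (i + int n)) [0..<Suc N]) = length [l i]" by simp
    then have "N = 0" by (simp del: upt_Suc)
    then show False using that unfolding N_def by simp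
  qed
  show ?thesis
  proof (rule injI)
    fix i j assume "l i = l j"
    show "i = j"
    proof (cases i j rule: linorder_cases)
      case less then show ?thesis using * \<open>l i = l j\<close> by blast
    next
      case greater then show ?thesis using * \<open>l i = l j\<close> by metis
    qed
  qed
qed

lemma pth_line_pos: assumes "bi_line E l"
  shows "pth (l 0) (l (int t)) = map (\<lambda>s. l (int t - int s)) [0..<Suc t]"
  by (rule pth_eq[OF ray_walk[OF line_ray_minus[OF assms]]]) simp_all

lemma pth_line_neg: assumes "bi_line E l"
  shows "pth (l 0) (l (- int t)) = map (\<lambda>s. l (- int t + int s)) [0..<Suc t]"
  by (rule pth_eq[OF ray_walk[OF line_ray_plus[OF assms]]]) simp_all

lemma pth_line_len: assumes "bi_line E l" shows "length (pth (l 0) (l i)) = nat \<bar>i\<bar> + 1"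
proof (cases "i \<ge> 0")
  case True
  define t where "t = nat i"
  have "i = int t" using True unfolding t_def by simp
  then show ?thesis using pth_line_pos[OF assms, of t] by simp
next
  case False
  define t where "t = nat (- i)"
  have "i = - int t" using False unfolding t_def by simp
  then show ?thesis using pth_line_neg[OF assms, of t] by simp
qed

lemma pth_line_Suc: assumes "bi_line E l"
  shows "pth (l 0) (l (int (Suc t))) = l (int (Suc t)) # pth (l 0) (l (int t))"
proof -
  have "map (\<lambda>s. l (int (Suc t) - int s)) [0..<Suc (Suc t)] =
     l (int (Suc t)) # map (\<lambda>s. l (int (Suc t) - int (Suc s))) [0..<Suc t]"
    by (subst map_upt_Suc) simp
  also have "map (\<lambda>s. l (int (Suc t) - int (Suc s))) [0..<Suc t] = map (\<lambda>s. l (int t - int s)) [0..<Suc t]"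
    by simp
  finally show ?thesis unfolding pth_line_pos[OF assms] .
qed

lemma pth_line_Suc_neg: assumes "bi_line E l"
  shows "pth (l 0) (l (- int (Suc t))) = l (- int (Suc t)) # pth (l 0) (l (- int t))"
proof -
  have "map (\<lambda>s. l (- int (Suc t) + int s)) [0..<Suc (Suc t)] =
     l (- int (Suc t)) # map (\<lambda>s. l (- int (Suc t) + int (Suc s))) [0..<Suc t]"
    by (subst map_upt_Suc) simp
  also have "map (\<lambda>s. l (- int (Suc t) + int (Suc s))) [0..<Suc t] = map (\<lambda>s. l (- int t + int s)) [0..<Suc t]"
    by simp
  finally show ?thesis unfolding pth_line_neg[OF assms] .
qed

definition Rl :: "(int \<Rightarrow> 'v) \<Rightarrow> (int \<Rightarrow> 'v) \<Rightarrow> 'v list \<Rightarrow> 'v list \<Rightarrow> ('v \<times> 'v) set" where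
  "Rl l l2 xs ys = {(a, c). a \<in> ch xs \<and> c \<in> ch ys \<and> (\<exists>i. hd xs = l i \<and> hd ys = l2 i \<and>
      ((a = l (i+1) \<and> c = l2 (i+1)) \<or> (a = l (i-1) \<and> c = l2 (i-1))))}"

definition spec :: "(int \<Rightarrow> 'v) \<Rightarrow> (int \<Rightarrow> 'v) \<Rightarrow> 'v list \<Rightarrow> 'v list \<Rightarrow> ('v \<Rightarrow> 'v) \<Rightarrow> bool" where
  "spec l l2 xs ys f \<longleftrightarrow> bij_betw f (ch xs) (ch ys) \<and> (\<forall>(a,c)\<in>Rl l l2 xs ys. f a = c) \<and>
      (ch xs = ch ys \<and> Rl l l2 xs ys \<subseteq> Id \<longrightarrow> (\<forall>a\<in>ch xs. f a = a))"

definition lstep :: "(int \<Rightarrow> 'v) \<Rightarrow> (int \<Rightarrow> 'v) \<Rightarrow> 'v list \<Rightarrow> 'v list \<Rightarrow> 'v \<Rightarrow> 'v" where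
  "lstep l l2 xs ys = (SOME f. spec l l2 xs ys f)"

lemma lstep_spec: assumes l: "bi_line E l" and l2: "bi_line E l2" and "nb_walk E xs" "nb_walk E ys"
  "length xs = length ys"
  shows "spec l l2 xs ys (lstep l l2 xs ys)"
proof -
  have "\<exists>f. spec l l2 xs ys f"
  proof (cases "ch xs = ch ys \<and> Rl l l2 xs ys \<subseteq> Id")
    case True
    then show ?thesis unfolding spec_def by (intro exI[of _ id]) auto
  next
    case False
    have il: "inj l" "inj l2" using line_inj l l2 by auto
    have "\<exists>f. bij_betw f (ch xs) (ch ys) \<and> (\<forall>(a,c)\<in>Rl l l2 xs ys. f a = c)"
    proof (rule bij_extend)
      show "finite (ch xs)" "finite (ch ys)" "card (ch xs) = card (ch ys)" using card_ch assms by auto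
      show "Rl l l2 xs ys \<subseteq> ch xs \<times> ch ys" unfolding Rl_def by auto
      fix a b b' assume "(a, b) \<in> Rl l l2 xs ys" "(a, b') \<in> Rl l l2 xs ys"
      then have "\<exists>i. hd xs = l i \<and> ((a = l (i+1) \<and> b = l2 (i+1)) \<or> (a = l (i-1) \<and> b = l2 (i-1)))"
        "\<exists>i'. hd xs = l i' \<and> ((a = l (i'+1) \<and> b' = l2 (i'+1)) \<or> (a = l (i'-1) \<and> b' = l2 (i'-1)))"
        unfolding Rl_def by blast+
      then obtain i i' where H: "hd xs = l i" "(a = l (i+1) \<and> b = l2 (i+1)) \<or> (a = l (i-1) \<and> b = l2 (i-1))"
        "hd xs = l i'" "(a = l (i'+1) \<and> b' = l2 (i'+1)) \<or> (a = l (i'-1) \<and> b' = l2 (i'-1))"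
        by blast
      have "i = i'" using H(1,3) il(1) injD by metis
      moreover have "l (i+1) \<noteq> l (i-1)" using il(1) by (simp add: inj_eq)
      ultimately show "b = b'" using H(2,4) by auto
    next
      fix a a' b assume "(a, b) \<in> Rl l l2 xs ys" "(a', b) \<in> Rl l l2 xs ys"
      then have "\<exists>i. hd ys = l2 i \<and> ((a = l (i+1) \<and> b = l2 (i+1)) \<or> (a = l (i-1) \<and> b = l2 (i-1)))"
        "\<exists>i'. hd ys = l2 i' \<and> ((a' = l (i'+1) \<and> b = l2 (i'+1)) \<or> (a' = l (i'-1) \<and> b = l2 (i'-1)))"
        unfolding Rl_def by blast+
      then obtain i i' where H: "hd ys = l2 i" "(a = l (i+1) \<and> b = l2 (i+1)) \<or> (a = l (i-1) \<and> b = l2 (i-1))"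
        "hd ys = l2 i'" "(a' = l (i'+1) \<and> b = l2 (i'+1)) \<or> (a' = l (i'-1) \<and> b = l2 (i'-1))"
        by blast
      have "i = i'" using H(1,3) il(2) injD by metis
      moreover have "l2 (i+1) \<noteq> l2 (i-1)" using il(2) by (simp add: inj_eq)
      ultimately show "a = a'" using H(2,4) by auto
    qed
    then show ?thesis using False unfolding spec_def by blast
  qed
  then show ?thesis unfolding lstep_def by (rule someI_ex)
qed

lemma extn_line: assumes "bi_line E l" "bi_line E l2" shows "extn q E (l 0) (l2 0) (lstep l l2)"
proof unfold_locales
  fix xs ys assume "nb_walk E xs" "last xs = l 0" "nb_walk E ys" "last ys = l2 0" "length xs = length ys"
  then show "bij_betw (lstep l l2 xs ys) (ch xs) (ch ys)" using lstep_spec[OF assms] unfolding spec_def by blast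
qed

end

context rtree begin

lemma spec_R: "spec l l2 xs ys f \<Longrightarrow> (a, c) \<in> Rl l l2 xs ys \<Longrightarrow> f a = c"
  unfolding spec_def by auto

lemma line_map:
  assumes l: "bi_line E l" and l2: "bi_line E l2"
  shows "\<exists>g\<in>Aut E. (\<forall>i. g (l i) = l2 i) \<and> ((l2 0 = l 0 \<and> (\<forall>i. \<bar>i\<bar> \<le> int n + 1 \<longrightarrow> l2 i = l i))
           \<longrightarrow> (\<forall>u. length (pth (l 0) u) \<le> n + 1 \<longrightarrow> g u = u))"
proof -
  interpret X: extn q E "l 0" "l2 0" "lstep l l2" by (rule extn_line[OF l l2])
  have sp: "spec l l2 xs ys (lstep l l2 xs ys)" if "nb_walk E xs" "nb_walk E ys" "length xs = length ys" for xs ys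
    using lstep_spec[OF l l2 that] .
  have pos: "X.gext (l (int t)) = l2 (int t)" for t
  proof (induction t)
    case 0 then show ?case using X.gext_b by simp
  next
    case (Suc t)
    define xs where "xs = pth (l 0) (l (int t))"
    define ys where "ys = pth (l2 0) (l2 (int t))"
    have P1: "pth (l 0) (l (int (Suc t))) = l (int (Suc t)) # xs" using pth_line_Suc[OF l] xs_def by simp
    have P2: "pth (l2 0) (l2 (int (Suc t))) = l2 (int (Suc t)) # ys" using pth_line_Suc[OF l2] ys_def by simp
    have ne: "xs \<noteq> []" "ys \<noteq> []" unfolding xs_def ys_def by (rule pth_ne)+
    have "X.gext (l (int (Suc t))) = lstep l l2 xs (gm (l2 0) (lstep l l2) xs) (l (int (Suc t)))"
      by (rule X.gext_Cons[OF P1 ne(1)])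
    also have "gm (l2 0) (lstep l l2) xs = ys" unfolding xs_def ys_def X.G4 Suc.IH ..
    finally have eq: "X.gext (l (int (Suc t))) = lstep l l2 xs ys (l (int (Suc t)))" .
    have "(l (int (Suc t)), l2 (int (Suc t))) \<in> Rl l l2 xs ys"
    proof -
      have "l (int (Suc t)) \<in> ch xs" using pth_Cons[OF P1 ne(1)] by blast
      moreover have "l2 (int (Suc t)) \<in> ch ys" using pth_Cons[OF P2 ne(2)] by blast
      moreover have "hd xs = l (int t)" "hd ys = l2 (int t)" using pth(2) xs_def ys_def by auto
      moreover have "int (Suc t) = int t + 1" by simp
      ultimately show ?thesis unfolding Rl_def
        by (intro CollectI case_prodI conjI exI[of _ "int t"] disjI1) (simp_all add: add.commute)
    qed
    moreover have "spec l l2 xs ys (lstep l l2 xs ys)"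
      unfolding xs_def ys_def by (rule sp[OF pth(1) pth(1)]) (simp add: pth_line_len[OF l] pth_line_len[OF l2])
    ultimately show ?case using eq spec_R by metis
  qed
  have neg: "X.gext (l (- int t)) = l2 (- int t)" for t
  proof (induction t)
    case 0 then show ?case using X.gext_b by simp
  next
    case (Suc t)
    define xs where "xs = pth (l 0) (l (- int t))"
    define ys where "ys = pth (l2 0) (l2 (- int t))"
    have P1: "pth (l 0) (l (- int (Suc t))) = l (- int (Suc t)) # xs" using pth_line_Suc_neg[OF l] xs_def by simp
    have P2: "pth (l2 0) (l2 (- int (Suc t))) = l2 (- int (Suc t)) # ys" using pth_line_Suc_neg[OF l2] ys_def by simp
    have ne: "xs \<noteq> []" "ys \<noteq> []" unfolding xs_def ys_def by (rule pth_ne)+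
    have "X.gext (l (- int (Suc t))) = lstep l l2 xs (gm (l2 0) (lstep l l2) xs) (l (- int (Suc t)))"
      by (rule X.gext_Cons[OF P1 ne(1)])
    also have "gm (l2 0) (lstep l l2) xs = ys" unfolding xs_def ys_def X.G4 Suc.IH ..
    finally have eq: "X.gext (l (- int (Suc t))) = lstep l l2 xs ys (l (- int (Suc t)))" .
    have "(l (- int (Suc t)), l2 (- int (Suc t))) \<in> Rl l l2 xs ys"
    proof -
      have "l (- int (Suc t)) \<in> ch xs" using pth_Cons[OF P1 ne(1)] by blast
      moreover have "l2 (- int (Suc t)) \<in> ch ys" using pth_Cons[OF P2 ne(2)] by blast
      moreover have "hd xs = l (- int t)" "hd ys = l2 (- int t)" using pth(2) xs_def ys_def by auto
      moreover have "- int (Suc t) = - int t - 1" by simp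
      have ee: "- int t - 1 = -1 - int t" by simp
      ultimately show ?thesis unfolding Rl_def
        by (intro CollectI case_prodI conjI exI[of _ "- int t"] disjI2) (simp_all add: ee)
    qed
    moreover have "spec l l2 xs ys (lstep l l2 xs ys)"
      unfolding xs_def ys_def by (rule sp[OF pth(1) pth(1)]) (simp add: pth_line_len[OF l] pth_line_len[OF l2])
    ultimately show ?case using eq spec_R by metis
  qed
  have all: "X.gext (l i) = l2 i" for i
  proof (cases "i \<ge> 0")
    case True
    then have "i = int (nat i)" by simp
    then show ?thesis using pos by metis
  next
    case False
    then have "i = - int (nat (- i))" by simp
    then show ?thesis using neg by metis
  qed
  have ball: "\<forall>u. length (pth (l 0) u) \<le> n + 1 \<longrightarrow> X.gext u = u"
    if A: "l2 0 = l 0" "\<forall>i. \<bar>i\<bar> \<le> int n + 1 \<longrightarrow> l2 i = l i"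
  proof -
    have key: "nb_walk E xs \<Longrightarrow> last xs = l 0 \<Longrightarrow> length xs \<le> n + 1 \<Longrightarrow> gm (l2 0) (lstep l l2) xs = xs" for xs
    proof (induction xs rule: induct_list012)
      case 1 then show ?case by (simp add: nb_walk_def)
    next
      case (2 x) then show ?case using A(1) by simp
    next
      case (3 x y zs)
      have w: "nb_walk E (y # zs)" "x \<in> ch (y # zs)" using nb_walk_Cons2 3(3) by auto
      have lst: "last (y # zs) = l 0" using 3(4) by simp
      have IH: "gm (l2 0) (lstep l l2) (y # zs) = y # zs" using 3(2)[OF w(1) lst] 3(5) by simp
      have S: "spec l l2 (y # zs) (y # zs) (lstep l l2 (y # zs) (y # zs))" using sp w(1) by blast
      have "Rl l l2 (y # zs) (y # zs) \<subseteq> Id"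
      proof
        fix p assume "p \<in> Rl l l2 (y # zs) (y # zs)"
        then obtain a c where p: "p = (a, c)" "(a, c) \<in> Rl l l2 (y # zs) (y # zs)" by (cases p) auto
        then have "\<exists>i. y = l i \<and> y = l2 i \<and> ((a = l (i+1) \<and> c = l2 (i+1)) \<or> (a = l (i-1) \<and> c = l2 (i-1)))"
          unfolding Rl_def by auto
        then obtain i where i: "y = l i" "(a = l (i+1) \<and> c = l2 (i+1)) \<or> (a = l (i-1) \<and> c = l2 (i-1))" by blast
        have "pth (l 0) y = y # zs" using pth_eq[OF w(1)] lst by simp
        then have "nat \<bar>i\<bar> + 1 \<le> n" using pth_line_len[OF l, of i] i(1) 3(5) by simp
        then have "\<bar>i+1\<bar> \<le> int n + 1" "\<bar>i-1\<bar> \<le> int n + 1" by linarith+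
        then have "l2 (i+1) = l (i+1)" "l2 (i-1) = l (i-1)" using A(2) by blast+
        then show "p \<in> Id" using i(2) p(1) by auto
      qed
      then have "lstep l l2 (y # zs) (y # zs) x = x" using S w(2) unfolding spec_def by blast
      then show ?case using IH by simp
    qed
    show ?thesis
    proof (intro allI impI)
      fix u assume "length (pth (l 0) u) \<le> n + 1"
      then have "gm (l2 0) (lstep l l2) (pth (l 0) u) = pth (l 0) u" using key pth by blast
      then show "X.gext u = u" unfolding X.gext_def using pth(2) by simp
    qed
  qed
  show ?thesis using X.gext_Aut all ball by blast
qed

end

context rtree begin

abbreviation cls :: "(nat \<Rightarrow> 'v) \<Rightarrow> (nat \<Rightarrow> 'v) set" where "cls r \<equiv> ray_equiv E `` {r}"

lemma req_rays: "(r, s) \<in> ray_equiv E \<Longrightarrow> ray E r \<and> ray E s" unfolding ray_equiv_def by auto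

lemma req_refl: "ray E r \<Longrightarrow> (r, r) \<in> ray_equiv E"
  unfolding ray_equiv_def by (auto intro!: exI[of _ 0])

lemma req_sym: "(r, s) \<in> ray_equiv E \<Longrightarrow> (s, r) \<in> ray_equiv E"
  unfolding ray_equiv_def by (auto simp: eq_commute)

lemma req_trans: assumes "(r, s) \<in> ray_equiv E" "(s, t) \<in> ray_equiv E" shows "(r, t) \<in> ray_equiv E"
proof -
  obtain k j where 1: "\<forall>n. r (n + k) = s (n + j)" using assms(1) unfolding ray_equiv_def by auto
  obtain k' j' where 2: "\<forall>n. s (n + k') = t (n + j')" using assms(2) unfolding ray_equiv_def by auto
  have "\<forall>n. r (n + (k + k')) = t (n + (j + j'))"
  proof
    fix n
    have "r (n + (k + k')) = s ((n + k') + j)" using 1[rule_format, of "n + k'"] by (simp add: ac_simps)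
    also have "\<dots> = t ((n + j) + j')" using 2[rule_format, of "n + j"] by (simp add: ac_simps)
    finally show "r (n + (k + k')) = t (n + (j + j'))" by (simp add: ac_simps)
  qed
  then show ?thesis using assms unfolding ray_equiv_def by blast
qed

lemma equiv_rays: "equiv {r. ray E r} (ray_equiv E)"
proof (rule equivI)
  show "ray_equiv E \<subseteq> {r. ray E r} \<times> {r. ray E r}" using req_rays by auto
  show "refl_on {r. ray E r} (ray_equiv E)" by (rule refl_onI) (use req_refl in blast)
  show "sym (ray_equiv E)" by (rule symI) (rule req_sym)
  show "trans (ray_equiv E)" by (rule transI) (rule req_trans)
qed

lemma bd_cls: "\<omega> \<in> boundary E \<Longrightarrow> \<exists>r. ray E r \<and> \<omega> = cls r"
  unfolding boundary_def by (erule quotientE) auto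

lemma bd_mem_ray: "\<omega> \<in> boundary E \<Longrightarrow> r \<in> \<omega> \<Longrightarrow> ray E r"
  using bd_cls req_rays by blast

lemma bd_eq_cls: "\<omega> \<in> boundary E \<Longrightarrow> r \<in> \<omega> \<Longrightarrow> \<omega> = cls r"
  using bd_cls equiv_class_eq[OF equiv_rays] by blast

lemma cls_bd: "ray E r \<Longrightarrow> cls r \<in> boundary E"
  unfolding boundary_def by (rule quotientI) simp

lemma cls_self: "ray E r \<Longrightarrow> r \<in> cls r" using req_refl by blast

lemma bd_rel: "\<omega> \<in> boundary E \<Longrightarrow> r \<in> \<omega> \<Longrightarrow> s \<in> \<omega> \<Longrightarrow> (r, s) \<in> ray_equiv E"
  using bd_eq_cls by blast

lemma bd_closed: "\<omega> \<in> boundary E \<Longrightarrow> r \<in> \<omega> \<Longrightarrow> (r, s) \<in> ray_equiv E \<Longrightarrow> s \<in> \<omega>"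
  using bd_eq_cls by blast

lemma cls_eqI: "(r, s) \<in> ray_equiv E \<Longrightarrow> cls r = cls s"
  using equiv_class_eq[OF equiv_rays] by blast

lemma ray_unique: assumes "ray E s" "ray E c" "s 0 = c 0" "(s, c) \<in> ray_equiv E" shows "s = c"
proof
  fix i
  obtain k j where kj: "\<forall>n. s (n + k) = c (n + j)" using assms(4) unfolding ray_equiv_def by auto
  have w1: "nb_walk E (map s [0..<Suc (i + k)])" using ray_walk assms(1) by blast
  have w2: "nb_walk E (map c [0..<Suc (i + j)])" using ray_walk assms(2) by blast
  have "map s [0..<Suc (i + k)] = map c [0..<Suc (i + j)]"
    by (rule walk_unique[OF w1 w2]) (use assms(3) kj in simp_all)
  then have "map s [0..<Suc (i + k)] ! i = map c [0..<Suc (i + j)] ! i" by simp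
  then show "s i = c i" by (simp del: map_upt_Suc add: nth_map)
qed

lemma prefix_agree:
  assumes a: "ray E a" and c: "ray E c" and r: "ray E r" and c0: "c 0 = a 0"
    and r0: "r 0 = a n" and r1: "r 1 = a (Suc n)" and cr: "(c, r) \<in> ray_equiv E"
  shows "\<forall>j\<le>Suc n. c j = a j"
proof -
  define s where "s k = (if k \<le> n then a k else r (k - n))" for k
  have sray: "ray E s" unfolding ray_def
  proof (intro allI conjI)
    fix k
    show "E (s k) (s (Suc k))"
    proof (cases "k < n")
      case True then show ?thesis using a unfolding s_def ray_def by auto
    next
      case False
      then have "k = n \<or> k > n" by auto
      then show ?thesis
      proof
        assume "k = n"
        then have "s k = r 0" "s (Suc k) = r 1" using r0 unfolding s_def by auto
        then show ?thesis using r unfolding ray_def by (metis One_nat_def)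
      next
        assume "k > n"
        then have "Suc k - n = Suc (k - n)" by simp
        then show ?thesis using r \<open>k > n\<close> unfolding s_def ray_def by auto
      qed
    qed
    show "s (Suc (Suc k)) \<noteq> s k"
    proof (cases "Suc (Suc k) \<le> n")
      case True then show ?thesis using a unfolding s_def ray_def by auto
    next
      case False
      then have "Suc k = n \<or> k = n \<or> k > n" by auto
      then show ?thesis
      proof (elim disjE)
        assume "Suc k = n"
        then have "s (Suc (Suc k)) = a (Suc (Suc k))" "s k = a k" using r1 unfolding s_def by auto
        then show ?thesis using a unfolding ray_def by auto
      next
        assume "k = n"
        then have "s (Suc (Suc k)) = r 2" "s k = r 0" using r0 unfolding s_def by auto
        then show ?thesis using r unfolding ray_def by (metis numeral_2_eq_2)
      next
        assume "k > n"
        then have "s (Suc (Suc k)) = r (Suc (Suc (k - n)))" "s k = r (k - n)" unfolding s_def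
          by (auto simp: Suc_diff_le)
        then show ?thesis using r unfolding ray_def by auto
      qed
    qed
  qed
  have "\<forall>k. s (k + n) = r (k + 0)" unfolding s_def using r0 by auto
  then have "(s, r) \<in> ray_equiv E" unfolding ray_equiv_def using sray r by blast
  then have "(c, s) \<in> ray_equiv E" using cr req_trans req_sym by blast
  then have "c = s" using ray_unique[OF c sray] c0 unfolding s_def by simp
  show ?thesis
  proof (intro allI impI)
    fix j assume "j \<le> Suc n"
    then have "j \<le> n \<or> j = Suc n" by auto
    then show "c j = a j" using \<open>c = s\<close> r1 unfolding s_def by auto
  qed
qed

section \<open>Automorphisms\<close>

lemma Aut_bij: "g \<in> Aut E \<Longrightarrow> bij g" unfolding Aut_def by auto
lemma Aut_E: "g \<in> Aut E \<Longrightarrow> E (g x) (g y) = E x y" unfolding Aut_def by auto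
lemma Aut_id: "id \<in> Aut E" unfolding Aut_def by auto
lemma Aut_comp: assumes "g \<in> Aut E" "h \<in> Aut E" shows "g \<circ> h \<in> Aut E"
proof -
  have "bij (g \<circ> h)" using bij_comp[OF Aut_bij[OF assms(2)] Aut_bij[OF assms(1)]] .
  moreover have "E ((g \<circ> h) x) ((g \<circ> h) y) = E x y" for x y
    using Aut_E[OF assms(1), of "h x" "h y"] Aut_E[OF assms(2), of x y] by simp
  ultimately show ?thesis unfolding Aut_def by blast
qed
lemma Aut_inv: assumes "g \<in> Aut E" shows "inv g \<in> Aut E"
proof -
  have b: "bij g" using assms Aut_bij by blast
  have sf: "g (inv g z) = z" for z using b by (simp add: bij_is_surj surj_f_inv_f)
  have "E (inv g x) (inv g y) = E x y" for x y
    using Aut_E[OF assms, of "inv g x" "inv g y"] sf[of x] sf[of y] by simp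
  then show ?thesis unfolding Aut_def using bij_imp_bij_inv b by blast
qed

lemma Aut_inv_l: "g \<in> Aut E \<Longrightarrow> inv g \<circ> g = id"
  by (rule inv_o_cancel[OF bij_is_inj[OF Aut_bij]])
lemma Aut_inv_r: "g \<in> Aut E \<Longrightarrow> g \<circ> inv g = id"
  by (rule surj_iff[THEN iffD1, OF bij_is_surj[OF Aut_bij]])
lemma Aut_inj: assumes "g \<in> Aut E" shows "g x = g y \<longleftrightarrow> x = y"
  using inj_eq[OF bij_is_inj[OF Aut_bij[OF assms]]] .

lemma Aut_ray: "g \<in> Aut E \<Longrightarrow> ray E r \<Longrightarrow> ray E (g \<circ> r)"
  unfolding ray_def by (simp add: Aut_E Aut_inj)

lemma Aut_line: "g \<in> Aut E \<Longrightarrow> bi_line E l \<Longrightarrow> bi_line E (g \<circ> l)"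
  unfolding bi_line_def by (simp add: Aut_E Aut_inj)

lemma Aut_req: assumes "g \<in> Aut E" "(r, s) \<in> ray_equiv E" shows "(g \<circ> r, g \<circ> s) \<in> ray_equiv E"
proof -
  obtain k j where kj: "\<forall>n. r (n + k) = s (n + j)" "ray E r" "ray E s"
    using assms(2) unfolding ray_equiv_def by auto
  have "\<forall>n. (g \<circ> r) (n + k) = (g \<circ> s) (n + j)" using kj by simp
  then show ?thesis unfolding ray_equiv_def using Aut_ray[OF assms(1)] kj by blast
qed

lemma bd_act_cls: assumes g: "g \<in> Aut E" and r: "ray E r" shows "bd_act g (cls r) = cls (g \<circ> r)"
proof
  show "bd_act g (cls r) \<subseteq> cls (g \<circ> r)" unfolding bd_act_def using Aut_req[OF g] by auto
  show "cls (g \<circ> r) \<subseteq> bd_act g (cls r)"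
  proof
    fix s assume "s \<in> cls (g \<circ> r)"
    then have "(g \<circ> r, s) \<in> ray_equiv E" by simp
    then have "(inv g \<circ> (g \<circ> r), inv g \<circ> s) \<in> ray_equiv E" using Aut_req Aut_inv g by blast
    then have "(r, inv g \<circ> s) \<in> ray_equiv E" using Aut_inv_l[OF g] by (simp add: o_assoc)
    moreover have "s = g \<circ> (inv g \<circ> s)" using Aut_inv_r[OF g] by (simp add: o_assoc)
    ultimately show "s \<in> bd_act g (cls r)" unfolding bd_act_def by blast
  qed
qed

lemma bd_act_comp: "bd_act (g \<circ> h) \<omega> = bd_act g (bd_act h \<omega>)"
  unfolding bd_act_def by (auto simp: image_image o_assoc)

lemma bd_act_id: "bd_act id \<omega> = \<omega>" unfolding bd_act_def by simp

lemma bd_act_bd: assumes "g \<in> Aut E" "\<omega> \<in> boundary E" shows "bd_act g \<omega> \<in> boundary E"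
proof -
  obtain r where r: "ray E r" "\<omega> = cls r" using bd_cls assms(2) by blast
  have "bd_act g \<omega> = cls (g \<circ> r)" using bd_act_cls[OF assms(1) r(1)] r(2) by simp
  then show ?thesis using cls_bd Aut_ray[OF assms(1) r(1)] by simp
qed

section \<open>Lines\<close>

definition lm :: "(int \<Rightarrow> 'v) \<Rightarrow> nat \<Rightarrow> 'v" where "lm l = (\<lambda>n. l (- int n))"
definition lp :: "(int \<Rightarrow> 'v) \<Rightarrow> nat \<Rightarrow> 'v" where "lp l = (\<lambda>n. l (int n))"

lemma lm_ray: "bi_line E l \<Longrightarrow> ray E (lm l)"
  using line_ray_minus[of l 0] unfolding lm_def by simp
lemma lp_ray: "bi_line E l \<Longrightarrow> ray E (lp l)"
  using line_ray_plus[of l 0] unfolding lp_def by simp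

lemma lm_comp: "g \<circ> lm l = lm (g \<circ> l)" unfolding lm_def by auto
lemma lp_comp: "g \<circ> lp l = lp (g \<circ> l)" unfolding lp_def by auto

lemma shift_minus: assumes "bi_line E l" shows "((\<lambda>n. l (a - int n)), (\<lambda>n. l (b - int n))) \<in> ray_equiv E"
proof -
  have "\<forall>n. l (a - int (n + nat (max 0 (a - b)))) = l (b - int (n + nat (max 0 (b - a))))"
    by (intro allI arg_cong[of _ _ l]) (simp add: max_def)
  then show ?thesis unfolding ray_equiv_def using line_ray_minus[OF assms] by blast
qed

lemma shift_plus: assumes "bi_line E l" shows "((\<lambda>n. l (a + int n)), (\<lambda>n. l (b + int n))) \<in> ray_equiv E"
proof -
  have "\<forall>n. l (a + int (n + nat (max 0 (b - a)))) = l (b + int (n + nat (max 0 (a - b))))"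
    by (intro allI arg_cong[of _ _ l]) (simp add: max_def)
  then show ?thesis unfolding ray_equiv_def using line_ray_plus[OF assms] by blast
qed

lemma line_shift: assumes "bi_line E l" shows "bi_line E (\<lambda>i. l (i + c))"
  unfolding bi_line_def
proof (intro conjI allI)
  fix i
  have "E (l (i + c)) (l (i + c + 1))" using assms unfolding bi_line_def by blast
  then show "E (l (i + c)) (l (i + 1 + c))" by (simp add: ac_simps)
  have "l (i + c + 2) \<noteq> l (i + c)" using assms unfolding bi_line_def by blast
  then show "l (i + 2 + c) \<noteq> l (i + c)" by (simp add: ac_simps)
qed

lemma geod_line: assumes "\<omega>1 \<in> boundary E" "\<omega>2 \<in> boundary E" "x \<in> geod E \<omega>1 \<omega>2"
  shows "\<exists>l. bi_line E l \<and> l 0 = x \<and> lm l \<in> \<omega>1 \<and> lp l \<in> \<omega>2"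
proof -
  obtain l c where l: "bi_line E l" "(\<lambda>n. l (- int n)) \<in> \<omega>1" "(\<lambda>n. l (int n)) \<in> \<omega>2" "x = l c"
    using assms(3) unfolding geod_def by blast
  define l' where "l' = (\<lambda>i. l (i + c))"
  have "bi_line E l'" unfolding l'_def using line_shift l(1) by blast
  moreover have "l' 0 = x" unfolding l'_def using l by simp
  moreover have "lm l' \<in> \<omega>1"
  proof -
    have "((\<lambda>n. l (0 - int n)), (\<lambda>n. l (c - int n))) \<in> ray_equiv E" using shift_minus l(1) by blast
    moreover have "lm l' = (\<lambda>n. l (c - int n))" unfolding lm_def l'_def by (simp add: algebra_simps)
    ultimately show ?thesis using bd_closed[OF assms(1) l(2)] by simp
  qed
  moreover have "lp l' \<in> \<omega>2"
  proof -
    have "((\<lambda>n. l (0 + int n)), (\<lambda>n. l (c + int n))) \<in> ray_equiv E" using shift_plus l(1) by blast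
    moreover have "lp l' = (\<lambda>n. l (c + int n))" unfolding lp_def l'_def by (simp add: algebra_simps)
    ultimately show ?thesis using bd_closed[OF assms(2) l(3)] by simp
  qed
  ultimately show ?thesis by blast
qed

lemma geod_intro: "bi_line E l \<Longrightarrow> lm l \<in> \<omega>1 \<Longrightarrow> lp l \<in> \<omega>2 \<Longrightarrow> l i \<in> geod E \<omega>1 \<omega>2"
  unfolding geod_def lm_def lp_def by blast

lemma geod_sub: assumes l: "bi_line E l"
  shows "geod E (cls (lm l)) (cls (lp l)) \<subseteq> range l"
proof
  fix x assume "x \<in> geod E (cls (lm l)) (cls (lp l))"
  then obtain l' t where l': "bi_line E l'" "(lm l, lm l') \<in> ray_equiv E" "(lp l, lp l') \<in> ray_equiv E" "x = l' t"
    unfolding geod_def lm_def lp_def by auto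
  obtain k j where kj: "\<forall>n. l (- int (n + k)) = l' (- int (n + j))" using l'(2) unfolding ray_equiv_def lm_def by auto
  obtain k' j' where kj': "\<forall>n. l (int (n + k')) = l' (int (n + j'))" using l'(3) unfolding ray_equiv_def lp_def by auto
  show "x \<in> range l"
  proof (cases "t < - int j")
    case True
    define n where "n = nat (- t - int j)"
    have "t = - int (n + j)" unfolding n_def using True by simp
    then have "x = l (- int (n + k))" using kj[rule_format, of n] l'(4) by simp
    then show ?thesis by blast
  next
    case F1: False
    show ?thesis
    proof (cases "t > int j'")
      case True
      define n where "n = nat (t - int j')"
      have "t = int (n + j')" unfolding n_def using True by simp
      then have "x = l (int (n + k'))" using kj'[rule_format, of n] l'(4) by simp
      then show ?thesis by blast
    next
      case False
      define W where "W = map (\<lambda>s. l (- int k + int s)) [0..<Suc (k + k')]"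
      define W' where "W' = map (\<lambda>s. l' (- int j + int s)) [0..<Suc (j + j')]"
      have w: "nb_walk E W" unfolding W_def using ray_walk line_ray_plus l by blast
      have w': "nb_walk E W'" unfolding W'_def using ray_walk line_ray_plus l'(1) by blast
      have "W = W'"
      proof (rule walk_unique[OF w w'])
        show "hd W = hd W'" unfolding W_def W'_def using kj[rule_format, of 0] by simp
        show "last W = last W'" unfolding W_def W'_def using kj'[rule_format, of 0] by simp
      qed
      define s where "s = nat (t + int j)"
      have s: "s < Suc (j + j')" "- int j + int s = t" unfolding s_def using F1 False by auto
      then have "W' ! s = x" unfolding W'_def l'(4) by (simp add: nth_map del: map_upt_Suc)
      have len: "Suc (k + k') = Suc (j + j')" using arg_cong[OF \<open>W = W'\<close>, of length] unfolding W_def W'_def by simp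
      have "x = W ! s" using \<open>W' ! s = x\<close> \<open>W = W'\<close> by simp
      also have "W ! s = l (- int k + int s)" unfolding W_def using s(1) len by (simp add: nth_map del: map_upt_Suc)
      finally have "x = l (- int k + int s)" .
      then show ?thesis by blast
    qed
  qed
qed

end

locale setting = rtree q E for q and E :: "'v \<Rightarrow> 'v \<Rightarrow> bool" +
  fixes l0 :: "int \<Rightarrow> 'v"
  assumes l0: "bi_line E l0"
    and ends_ne: "cls (lm l0) \<noteq> cls (lp l0)"
begin

abbreviation "wm \<equiv> cls (lm l0)"
abbreviation "wp \<equiv> cls (lp l0)"
abbreviation "MM \<equiv> Mgrp E wm wp"

definition Phi :: "('v \<Rightarrow> 'v) \<Rightarrow> (nat \<Rightarrow> 'v) set \<times> (nat \<Rightarrow> 'v) set \<times> 'v" where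
  "Phi g = (bd_act g wm, bd_act g wp, g (l0 0))"

lemma wm_bd: "wm \<in> boundary E" using cls_bd lm_ray l0 by blast
lemma wp_bd: "wp \<in> boundary E" using cls_bd lp_ray l0 by blast

lemma Phi_eq: assumes "g \<in> Aut E" shows "Phi g = (cls (lm (g \<circ> l0)), cls (lp (g \<circ> l0)), g (l0 0))"
  unfolding Phi_def using bd_act_cls[OF assms lm_ray[OF l0]] bd_act_cls[OF assms lp_ray[OF l0]]
  by (simp add: lm_comp lp_comp)

lemma M_Aut: "m \<in> MM \<Longrightarrow> m \<in> Aut E" unfolding Mgrp_def by blast

lemma M_fix_line: assumes "m \<in> MM" shows "m \<circ> l0 = l0"
proof
  fix i
  have "l0 i \<in> geod E wm wp" using geod_intro[OF l0] cls_self lm_ray lp_ray l0 by blast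
  then show "(m \<circ> l0) i = l0 i" using assms unfolding Mgrp_def by auto
qed

lemma M_id: "id \<in> MM" unfolding Mgrp_def using Aut_id by auto

lemma M_comp: "m1 \<in> MM \<Longrightarrow> m2 \<in> MM \<Longrightarrow> m1 \<circ> m2 \<in> MM"
  unfolding Mgrp_def using Aut_comp by auto

lemma M_inv: assumes "m \<in> MM" shows "inv m \<in> MM"
proof -
  have a: "m \<in> Aut E" using M_Aut assms by blast
  have "inv m x = x" if "x \<in> geod E wm wp" for x
  proof -
    have "m x = x" using assms that unfolding Mgrp_def by auto
    then show ?thesis using inv_f_eq[OF bij_is_inj[OF Aut_bij[OF a]]] by metis
  qed
  then show ?thesis unfolding Mgrp_def using Aut_inv[OF a] by blast
qed

lemma Phi_M: assumes "g \<in> Aut E" "m \<in> MM" shows "Phi (g \<circ> m) = Phi g"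
proof -
  have "(g \<circ> m) \<circ> l0 = g \<circ> l0" using M_fix_line[OF assms(2)] by (simp add: o_assoc[symmetric])
  moreover have "m (l0 0) = l0 0" using M_fix_line[OF assms(2)] by (metis comp_apply)
  ultimately show ?thesis using Phi_eq[OF assms(1)] Phi_eq[OF Aut_comp[OF assms(1) M_Aut[OF assms(2)]]] by simp
qed

lemma Phi_inj: assumes g: "g \<in> Aut E" and h: "h \<in> Aut E" and eq: "Phi g = Phi h"
  shows "inv h \<circ> g \<in> MM"
proof -
  define m where "m = inv h \<circ> g"
  have mA: "m \<in> Aut E" unfolding m_def using Aut_comp Aut_inv g h by blast
  have ih: "inv h \<circ> (h \<circ> l0) = l0" using Aut_inv_l[OF h] by (simp add: o_assoc)
  have im: "inv h \<circ> (g \<circ> l0) = m \<circ> l0" unfolding m_def by (simp add: o_assoc)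
  have e: "cls (lm (g \<circ> l0)) = cls (lm (h \<circ> l0))" "cls (lp (g \<circ> l0)) = cls (lp (h \<circ> l0))" "g (l0 0) = h (l0 0)"
    using eq Phi_eq[OF g] Phi_eq[OF h] by auto
  have lgA: "bi_line E (g \<circ> l0)" "bi_line E (h \<circ> l0)" using Aut_line l0 g h by auto
  have m0: "m (l0 0) = l0 0" unfolding m_def using e(3) inv_f_f[OF bij_is_inj[OF Aut_bij[OF h]]] by simp
  have "(lm (h \<circ> l0), lm (g \<circ> l0)) \<in> ray_equiv E"
    using e(1) cls_self[OF lm_ray[OF lgA(1)]] by simp
  then have "(inv h \<circ> lm (h \<circ> l0), inv h \<circ> lm (g \<circ> l0)) \<in> ray_equiv E" using Aut_req Aut_inv h by blast
  then have r1: "(lm l0, lm (m \<circ> l0)) \<in> ray_equiv E" using ih im by (simp add: lm_comp)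
  have "(lp (h \<circ> l0), lp (g \<circ> l0)) \<in> ray_equiv E"
    using e(2) cls_self[OF lp_ray[OF lgA(1)]] by simp
  then have "(inv h \<circ> lp (h \<circ> l0), inv h \<circ> lp (g \<circ> l0)) \<in> ray_equiv E" using Aut_req Aut_inv h by blast
  then have r2: "(lp l0, lp (m \<circ> l0)) \<in> ray_equiv E" using ih im by (simp add: lp_comp)
  have mline: "bi_line E (m \<circ> l0)" using Aut_line[OF mA l0] .
  have u1: "lm l0 = lm (m \<circ> l0)" using ray_unique[OF lm_ray[OF l0] lm_ray[OF mline] _ r1] m0 by (simp add: lm_def)
  have u2: "lp l0 = lp (m \<circ> l0)" using ray_unique[OF lp_ray[OF l0] lp_ray[OF mline] _ r2] m0 by (simp add: lp_def)
  have fx: "m (l0 i) = l0 i" for i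
  proof (cases "i \<ge> 0")
    case True
    then have "i = int (nat i)" by simp
    then show ?thesis using fun_cong[OF u2, of "nat i"] unfolding lp_def by (metis comp_apply)
  next
    case False
    then have "i = - int (nat (- i))" by simp
    then show ?thesis using fun_cong[OF u1, of "nat (- i)"] unfolding lm_def by (metis comp_apply)
  qed
  have "m x = x" if "x \<in> geod E wm wp" for x
    using geod_sub[OF l0] that fx by blast
  then show ?thesis using mA unfolding Mgrp_def m_def by blast
qed

lemma coset_eq: assumes g: "g \<in> Aut E" and h: "h \<in> Aut E" and m: "inv h \<circ> g \<in> MM"
  shows "lcoset g MM = lcoset h MM"
proof -
  define m where "m = inv h \<circ> g"
  have gh: "g = h \<circ> m" unfolding m_def using Aut_inv_r[OF h] by (simp add: o_assoc)
  have mM: "m \<in> MM" using m unfolding m_def .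
  have hg: "h = g \<circ> inv m"
  proof -
    have "g \<circ> inv m = h \<circ> (m \<circ> inv m)" using gh by (simp add: o_assoc)
    also have "m \<circ> inv m = id" using Aut_inv_r[OF M_Aut[OF mM]] .
    finally show ?thesis by (metis comp_id)
  qed
  show ?thesis unfolding lcoset_def
  proof
    show "(\<circ>) g ` MM \<subseteq> (\<circ>) h ` MM"
    proof
      fix y assume "y \<in> (\<circ>) g ` MM"
      then obtain x where x: "x \<in> MM" "y = g \<circ> x" by blast
      then have "y = h \<circ> (m \<circ> x)" using gh by (simp add: o_assoc)
      then show "y \<in> (\<circ>) h ` MM" using M_comp[OF mM x(1)] by blast
    qed
    show "(\<circ>) h ` MM \<subseteq> (\<circ>) g ` MM"
    proof
      fix y assume "y \<in> (\<circ>) h ` MM"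
      then obtain x where x: "x \<in> MM" "y = h \<circ> x" by blast
      then have "y = g \<circ> (inv m \<circ> x)" using hg by (simp add: o_assoc)
      then show "y \<in> (\<circ>) g ` MM" using M_comp[OF M_inv[OF mM] x(1)] by blast
    qed
  qed
qed

lemma Phi_Pset: assumes g: "g \<in> Aut E" shows "Phi g \<in> Pset E"
proof -
  have gl: "bi_line E (g \<circ> l0)" using Aut_line[OF g l0] .
  have b1: "cls (lm (g \<circ> l0)) \<in> boundary E" using cls_bd lm_ray gl by blast
  have b2: "cls (lp (g \<circ> l0)) \<in> boundary E" using cls_bd lp_ray gl by blast
  have ne: "cls (lm (g \<circ> l0)) \<noteq> cls (lp (g \<circ> l0))"
  proof
    assume a: "cls (lm (g \<circ> l0)) = cls (lp (g \<circ> l0))"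
    have ig: "inv g \<in> Aut E" using Aut_inv[OF g] .
    have "bd_act (inv g) (cls (lm (g \<circ> l0))) = cls (lm (inv g \<circ> (g \<circ> l0)))"
      using bd_act_cls[OF ig lm_ray[OF gl]] by (simp add: lm_comp)
    moreover have "bd_act (inv g) (cls (lp (g \<circ> l0))) = cls (lp (inv g \<circ> (g \<circ> l0)))"
      using bd_act_cls[OF ig lp_ray[OF gl]] by (simp add: lp_comp)
    moreover have "inv g \<circ> (g \<circ> l0) = l0" using Aut_inv_l[OF g] by (simp add: o_assoc)
    ultimately show False using a ends_ne by simp
  qed
  have "(g \<circ> l0) 0 \<in> geod E (cls (lm (g \<circ> l0))) (cls (lp (g \<circ> l0)))"
    by (rule geod_intro[OF gl]) (use cls_self lm_ray lp_ray gl in blast)+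
  then show ?thesis unfolding Pset_def using Phi_eq[OF g] b1 b2 ne by simp
qed

lemma Phi_surj: assumes "p \<in> Pset E" shows "\<exists>g\<in>Aut E. Phi g = p"
proof -
  obtain w1 w2 x where p: "p = (w1, w2, x)" "w1 \<in> boundary E" "w2 \<in> boundary E" "x \<in> geod E w1 w2"
    using assms unfolding Pset_def by auto
  obtain l2 where l2: "bi_line E l2" "l2 0 = x" "lm l2 \<in> w1" "lp l2 \<in> w2"
    using geod_line[OF p(2) p(3) p(4)] by blast
  obtain g where g: "g \<in> Aut E" "\<forall>i. g (l0 i) = l2 i" using line_map[OF l0 l2(1), of 0] by blast
  have "g \<circ> l0 = l2" using g(2) by auto
  then have "Phi g = (cls (lm l2), cls (lp l2), l2 0)" using Phi_eq[OF g(1)] g(2) by simp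
  also have "\<dots> = p" using bd_eq_cls[OF p(2) l2(3)] bd_eq_cls[OF p(3) l2(4)] l2(2) p(1) by simp
  finally show ?thesis using g(1) by blast
qed

lemma psi_coset: assumes g: "g \<in> Aut E" shows "psi (Aut E) (l0 0) wm wp (lcoset g MM) = Phi g"
proof -
  have "g \<in> lcoset g MM" unfolding lcoset_def by (rule image_eqI[of _ _ id]) (simp_all add: M_id)
  then have ex: "\<exists>g'. g' \<in> Aut E \<and> g' \<in> lcoset g MM" using g by blast
  define g' where "g' = (SOME g'. g' \<in> Aut E \<and> g' \<in> lcoset g MM)"
  have g': "g' \<in> Aut E" "g' \<in> lcoset g MM" using someI_ex[OF ex] unfolding g'_def by blast+
  then obtain m where m: "m \<in> MM" "g' = g \<circ> m" unfolding lcoset_def by blast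
  have "psi (Aut E) (l0 0) wm wp (lcoset g MM) = Phi g'" unfolding psi_def Phi_def g'_def Let_def ..
  also have "\<dots> = Phi g" using Phi_M[OF g m(1)] m(2) by simp
  finally show ?thesis .
qed

end

lemma quot_istop: "istopology (\<lambda>U. U \<subseteq> f ` topspace X \<and> openin X {x \<in> topspace X. f x \<in> U})"
proof -
  have i: "S \<inter> T \<subseteq> f ` topspace X \<and> openin X {x \<in> topspace X. f x \<in> S \<inter> T}"
    if S: "S \<subseteq> f ` topspace X \<and> openin X {x \<in> topspace X. f x \<in> S}"
    and T: "T \<subseteq> f ` topspace X \<and> openin X {x \<in> topspace X. f x \<in> T}" for S T
  proof -
    have "{x \<in> topspace X. f x \<in> S \<inter> T} = {x \<in> topspace X. f x \<in> S} \<inter> {x \<in> topspace X. f x \<in> T}" by auto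
    then show ?thesis using S T by auto
  qed
  have u: "\<Union>K \<subseteq> f ` topspace X \<and> openin X {x \<in> topspace X. f x \<in> \<Union>K}"
    if K: "\<forall>S\<in>K. S \<subseteq> f ` topspace X \<and> openin X {x \<in> topspace X. f x \<in> S}" for K
  proof -
    have "{x \<in> topspace X. f x \<in> \<Union>K} = \<Union>((\<lambda>S. {x \<in> topspace X. f x \<in> S}) ` K)" by auto
    moreover have "openin X (\<Union>((\<lambda>S. {x \<in> topspace X. f x \<in> S}) ` K))" using K by auto
    ultimately show ?thesis using K by auto
  qed
  show ?thesis unfolding istopology_def using i u by blast
qed

lemma openin_quot: "openin (quot_top X f) U \<longleftrightarrow> U \<subseteq> f ` topspace X \<and> openin X {x \<in> topspace X. f x \<in> U}"
  by (simp add: quot_top_def quot_istop)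

lemma topspace_quot: "topspace (quot_top X f) = f ` topspace X"
proof -
  have "{x \<in> topspace X. f x \<in> f ` topspace X} = topspace X" by auto
  then have "openin (quot_top X f) (f ` topspace X)" unfolding openin_quot by simp
  then have "f ` topspace X \<subseteq> topspace (quot_top X f)" by (rule openin_subset)
  moreover have "topspace (quot_top X f) \<subseteq> f ` topspace X" unfolding topspace_def openin_quot by auto
  ultimately show ?thesis by blast
qed

context rtree begin

definition basic :: "('v \<Rightarrow> 'v) \<Rightarrow> 'v set \<Rightarrow> ('v \<Rightarrow> 'v) set" where
  "basic h F = {h' \<in> Aut E. \<forall>x\<in>F. h' x = h x}"

lemma topspace_Aut_top: "topspace (Aut_top E) = Aut E"
  unfolding Aut_top_def topology_generated_by_topspace
proof
  show "\<Union> {{h \<in> Aut E. \<forall>x\<in>F. h x = g0 x} |g0 F. g0 \<in> Aut E \<and> finite F} \<subseteq> Aut E" by auto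
  show "Aut E \<subseteq> \<Union> {{h \<in> Aut E. \<forall>x\<in>F. h x = g0 x} |g0 F. g0 \<in> Aut E \<and> finite F}"
    using Aut_id by blast
qed

lemma Aut_top_open: "openin (Aut_top E) U \<longleftrightarrow> U \<subseteq> Aut E \<and> (\<forall>h\<in>U. \<exists>F. finite F \<and> basic h F \<subseteq> U)"
proof
  assume o: "openin (Aut_top E) U"
  have "U \<subseteq> Aut E" using openin_subset[OF o] topspace_Aut_top by simp
  moreover have "generate_topology_on {{h \<in> Aut E. \<forall>x\<in>F. h x = g0 x} |g0 F. g0 \<in> Aut E \<and> finite F} U"
    using o unfolding Aut_top_def by (rule openin_topology_generated_by)
  then have "\<forall>h\<in>U. \<exists>F. finite F \<and> basic h F \<subseteq> U"
  proof (induction rule: generate_topology_on.induct)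
    case Empty then show ?case by simp
  next
    case (Int a b)
    show ?case
    proof
      fix h assume "h \<in> a \<inter> b"
      then obtain F1 F2 where "finite F1" "basic h F1 \<subseteq> a" "finite F2" "basic h F2 \<subseteq> b" using Int by blast
      then show "\<exists>F. finite F \<and> basic h F \<subseteq> a \<inter> b"
        by (intro exI[of _ "F1 \<union> F2"]) (auto simp: basic_def)
    qed
  next
    case (UN K)
    show ?case
    proof
      fix h assume "h \<in> \<Union>K"
      then obtain k where "k \<in> K" "h \<in> k" by blast
      then obtain F where "finite F" "basic h F \<subseteq> k" using UN by blast
      then show "\<exists>F. finite F \<and> basic h F \<subseteq> \<Union>K" using \<open>k \<in> K\<close> by blast
    qed
  next
    case (Basis s)
    then obtain g0 F where s: "s = {h \<in> Aut E. \<forall>x\<in>F. h x = g0 x}" "finite F" by blast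
    show ?case
    proof
      fix h assume "h \<in> s"
      then have "basic h F \<subseteq> s" unfolding s basic_def by auto
      then show "\<exists>F. finite F \<and> basic h F \<subseteq> s" using s(2) by blast
    qed
  qed
  ultimately show "U \<subseteq> Aut E \<and> (\<forall>h\<in>U. \<exists>F. finite F \<and> basic h F \<subseteq> U)" by blast
next
  assume a: "U \<subseteq> Aut E \<and> (\<forall>h\<in>U. \<exists>F. finite F \<and> basic h F \<subseteq> U)"
  show "openin (Aut_top E) U"
  proof (subst openin_subopen, intro ballI)
    fix h assume h: "h \<in> U"
    then obtain F where F: "finite F" "basic h F \<subseteq> U" using a by blast
    have "openin (Aut_top E) (basic h F)" unfolding Aut_top_def basic_def
      by (rule topology_generated_by_Basis) (use F(1) h a in blast)
    moreover have "h \<in> basic h F" unfolding basic_def using h a by auto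
    ultimately show "\<exists>T. openin (Aut_top E) T \<and> h \<in> T \<and> T \<subseteq> U" using F(2) by blast
  qed
qed

lemma topspace_boundary_top: "topspace (boundary_top E) = boundary E"
  unfolding boundary_top_def topology_generated_by_topspace
proof
  show "\<Union> ((\<lambda>(x, y). bd_shadow E x y) ` {(x, y). E x y}) \<subseteq> boundary E" unfolding bd_shadow_def by auto
  show "boundary E \<subseteq> \<Union> ((\<lambda>(x, y). bd_shadow E x y) ` {(x, y). E x y})"
  proof
    fix w assume w: "w \<in> boundary E"
    then obtain r where r: "ray E r" "w = cls r" using bd_cls by blast
    have "r \<in> w" using r cls_self by simp
    then have "w \<in> bd_shadow E (r 0) (r 1)" unfolding bd_shadow_def using w by auto
    moreover have "E (r 0) (r 1)" using r(1) unfolding ray_def by (metis One_nat_def)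
    ultimately show "w \<in> \<Union> ((\<lambda>(x, y). bd_shadow E x y) ` {(x, y). E x y})" by blast
  qed
qed

lemma shadow_open: "E x y \<Longrightarrow> openin (boundary_top E) (bd_shadow E x y)"
  unfolding boundary_top_def by (rule topology_generated_by_Basis) blast

lemma topspace_P_top: "topspace (P_top E) = Pset E"
  unfolding P_top_def using topspace_boundary_top unfolding Pset_def by auto

lemma cont_bd: assumes w: "w \<in> boundary E" shows "continuous_map (Aut_top E) (boundary_top E) (\<lambda>g. bd_act g w)"
  unfolding boundary_top_def
proof (rule continuous_on_generated_topo)
  have eqU: "\<Union> ((\<lambda>(x, y). bd_shadow E x y) ` {(x, y). E x y}) = boundary E"
    using topspace_boundary_top unfolding boundary_top_def topology_generated_by_topspace .
  show "(\<lambda>g. bd_act g w) ` topspace (Aut_top E) \<subseteq> \<Union> ((\<lambda>(x, y). bd_shadow E x y) ` {(x, y). E x y})"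
    unfolding eqU topspace_Aut_top using bd_act_bd[OF _ w] by blast
next
  fix U assume "U \<in> (\<lambda>(x, y). bd_shadow E x y) ` {(x, y). E x y}"
  then obtain x y where U: "U = bd_shadow E x y" by auto
  show "openin (Aut_top E) ((\<lambda>g. bd_act g w) -` U \<inter> topspace (Aut_top E))"
    unfolding Aut_top_open topspace_Aut_top
  proof (intro conjI ballI)
    show "(\<lambda>g. bd_act g w) -` U \<inter> Aut E \<subseteq> Aut E" by blast
    fix h assume h: "h \<in> (\<lambda>g. bd_act g w) -` U \<inter> Aut E"
    then have "bd_act h w \<in> bd_shadow E x y" using U by simp
    then obtain r where r: "r \<in> bd_act h w" "r 0 = x" "r 1 = y" unfolding bd_shadow_def by blast
    then obtain s where s: "s \<in> w" "r = h \<circ> s" unfolding bd_act_def by blast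
    have "basic h {s 0, s 1} \<subseteq> (\<lambda>g. bd_act g w) -` U \<inter> Aut E"
    proof
      fix h' assume h': "h' \<in> basic h {s 0, s 1}"
      then have hA: "h' \<in> Aut E" "h' (s 0) = h (s 0)" "h' (s 1) = h (s 1)" unfolding basic_def by auto
      have "h' \<circ> s \<in> bd_act h' w" unfolding bd_act_def using s(1) by (rule imageI)
      moreover have "(h' \<circ> s) 0 = x" "(h' \<circ> s) 1 = y" using hA r s by auto
      moreover have "bd_act h' w \<in> boundary E" using bd_act_bd[OF hA(1) w] .
      ultimately have "bd_act h' w \<in> bd_shadow E x y" unfolding bd_shadow_def by blast
      then show "h' \<in> (\<lambda>g. bd_act g w) -` U \<inter> Aut E" using hA(1) U by simp
    qed
    moreover have "finite {s 0, s 1}" by simp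
    ultimately show "\<exists>F. finite F \<and> basic h F \<subseteq> (\<lambda>g. bd_act g w) -` U \<inter> Aut E" by blast
  qed
qed

lemma cont_pt: "continuous_map (Aut_top E) (discrete_topology UNIV) (\<lambda>g. g v)"
  unfolding continuous_map_def
proof (intro conjI allI impI)
  fix U :: "'v set"
  show "openin (Aut_top E) {x \<in> topspace (Aut_top E). x v \<in> U}"
    unfolding Aut_top_open topspace_Aut_top
  proof (intro conjI ballI)
    fix h assume h: "h \<in> {x \<in> Aut E. x v \<in> U}"
    have "basic h {v} \<subseteq> {x \<in> Aut E. x v \<in> U}" using h unfolding basic_def by auto
    moreover have "finite {v}" by simp
    ultimately show "\<exists>F. finite F \<and> basic h F \<subseteq> {x \<in> Aut E. x v \<in> U}" by blast
  qed auto
qed auto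

end

context setting begin

lemma cont_Phi: "continuous_map (Aut_top E) (P_top E) Phi"
  unfolding P_top_def continuous_map_in_subtopology
proof
  have e1: "fst \<circ> Phi = (\<lambda>g. bd_act g wm)" unfolding Phi_def by auto
  have e2: "fst \<circ> (snd \<circ> Phi) = (\<lambda>g. bd_act g wp)" unfolding Phi_def by auto
  have e3: "snd \<circ> (snd \<circ> Phi) = (\<lambda>g. g (l0 0))" unfolding Phi_def by auto
  show "continuous_map (Aut_top E) (prod_topology (boundary_top E) (prod_topology (boundary_top E) (discrete_topology UNIV))) Phi"
    unfolding continuous_map_pairwise e1 e2 e3 using cont_bd wm_bd wp_bd cont_pt by blast
  show "Phi \<in> topspace (Aut_top E) \<rightarrow> Pset E" using Phi_Pset topspace_Aut_top by auto
qed

lemma open_Phi: assumes U: "openin (Aut_top E) U" shows "openin (P_top E) (Phi ` U)"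
proof (subst openin_subopen, intro ballI)
  fix p assume "p \<in> Phi ` U"
  then obtain h where h: "h \<in> U" "p = Phi h" by blast
  have hA: "h \<in> Aut E" using U h(1) Aut_top_open by blast
  obtain F where F: "finite F" "basic h F \<subseteq> U" using U h(1) Aut_top_open by blast
  define n where "n = Max (insert 0 ((\<lambda>u. length (pth (l0 0) u)) ` F))"
  have nF: "length (pth (l0 0) u) \<le> n" if "u \<in> F" for u
    unfolding n_def using F(1) that by (intro Max_ge) auto
  define B where "B = bd_shadow E (h (l0 (- int n))) (h (l0 (- int (Suc n)))) \<times>
     (bd_shadow E (h (l0 (int n))) (h (l0 (int (Suc n)))) \<times> {h (l0 0)})"
  define T where "T = Pset E \<inter> B"
  have rm: "ray E (lm l0)" "ray E (lp l0)" using lm_ray lp_ray l0 by auto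
  have e1: "E (h (l0 (- int n))) (h (l0 (- int (Suc n))))"
    using rm(1) Aut_E[OF hA] unfolding ray_def lm_def by simp
  have e2: "E (h (l0 (int n))) (h (l0 (int (Suc n))))"
    using rm(2) Aut_E[OF hA] unfolding ray_def lp_def by simp
  have oB: "openin (prod_topology (boundary_top E) (prod_topology (boundary_top E) (discrete_topology UNIV))) B"
    unfolding B_def openin_prod_Times_iff using shadow_open[OF e1] shadow_open[OF e2] by simp
  have oT: "openin (P_top E) T" unfolding T_def P_top_def by (rule openin_subtopology_Int2[OF oB])
  have pT: "p \<in> T"
  proof -
    have ph: "Phi h = (cls (lm (h \<circ> l0)), cls (lp (h \<circ> l0)), h (l0 0))" using Phi_eq[OF hA] .
    have hl: "bi_line E (h \<circ> l0)" using Aut_line[OF hA l0] .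
    define ra where "ra = (\<lambda>k. (h \<circ> l0) (- int n - int k))"
    have "(lm (h \<circ> l0), ra) \<in> ray_equiv E"
      using shift_minus[OF hl, of 0 "- int n"] unfolding lm_def ra_def by simp
    then have "ra \<in> cls (lm (h \<circ> l0))" by simp
    moreover have "cls (lm (h \<circ> l0)) \<in> boundary E" using cls_bd lm_ray hl by blast
    moreover have ee: "- int n - int (1::nat) = - int (Suc n)" by simp
    moreover have "ra 1 = h (l0 (- int (Suc n)))" unfolding ra_def ee[symmetric] by simp
    moreover have "ra 0 = h (l0 (- int n))" unfolding ra_def by simp
    ultimately have 1: "cls (lm (h \<circ> l0)) \<in> bd_shadow E (h (l0 (- int n))) (h (l0 (- int (Suc n))))"
      unfolding bd_shadow_def by blast
    define rb where "rb = (\<lambda>k. (h \<circ> l0) (int n + int k))"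
    have "(lp (h \<circ> l0), rb) \<in> ray_equiv E"
      using shift_plus[OF hl, of 0 "int n"] unfolding lp_def rb_def by simp
    then have "rb \<in> cls (lp (h \<circ> l0))" by simp
    moreover have "cls (lp (h \<circ> l0)) \<in> boundary E" using cls_bd lp_ray hl by blast
    moreover have ee: "int n + int (1::nat) = int (Suc n)" by simp
    moreover have "rb 1 = h (l0 (int (Suc n)))" unfolding rb_def ee[symmetric] by simp
    moreover have "rb 0 = h (l0 (int n))" unfolding rb_def by simp
    ultimately have 2: "cls (lp (h \<circ> l0)) \<in> bd_shadow E (h (l0 (int n))) (h (l0 (int (Suc n))))"
      unfolding bd_shadow_def by blast
    show ?thesis unfolding T_def B_def using Phi_Pset[OF hA] h(2) ph 1 2 by simp
  qed
  have TU: "T \<subseteq> Phi ` U"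
  proof
    fix t assume t: "t \<in> T"
    then obtain w1 w2 x where t': "t = (w1, w2, x)" by (cases t) auto
    have tP: "w1 \<in> boundary E" "w2 \<in> boundary E" "x \<in> geod E w1 w2"
      using t t' unfolding T_def Pset_def by auto
    have tB: "w1 \<in> bd_shadow E (h (l0 (- int n))) (h (l0 (- int (Suc n))))"
      "w2 \<in> bd_shadow E (h (l0 (int n))) (h (l0 (int (Suc n))))" "x = h (l0 0)"
      using t t' unfolding T_def B_def by auto
    obtain l2 where l2: "bi_line E l2" "l2 0 = x" "lm l2 \<in> w1" "lp l2 \<in> w2"
      using geod_line[OF tP] by blast
    obtain r1 where r1: "r1 \<in> w1" "r1 0 = h (l0 (- int n))" "r1 1 = h (l0 (- int (Suc n)))"
      using tB(1) unfolding bd_shadow_def by blast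
    obtain r2 where r2: "r2 \<in> w2" "r2 0 = h (l0 (int n))" "r2 1 = h (l0 (int (Suc n)))"
      using tB(2) unfolding bd_shadow_def by blast
    have a1: "\<forall>j\<le>Suc n. lm l2 j = (h \<circ> lm l0) j"
    proof (rule prefix_agree)
      show "ray E (h \<circ> lm l0)" using Aut_ray[OF hA rm(1)] .
      show "ray E (lm l2)" using lm_ray[OF l2(1)] .
      show "ray E r1" using bd_mem_ray[OF tP(1) r1(1)] .
      show "lm l2 0 = (h \<circ> lm l0) 0" using l2(2) tB(3) unfolding lm_def by simp
      show "r1 0 = (h \<circ> lm l0) n" using r1(2) unfolding lm_def by simp
      show "r1 1 = (h \<circ> lm l0) (Suc n)" using r1(3) unfolding lm_def by simp
      show "(lm l2, r1) \<in> ray_equiv E" using bd_rel[OF tP(1) l2(3) r1(1)] .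
    qed
    have a2: "\<forall>j\<le>Suc n. lp l2 j = (h \<circ> lp l0) j"
    proof (rule prefix_agree)
      show "ray E (h \<circ> lp l0)" using Aut_ray[OF hA rm(2)] .
      show "ray E (lp l2)" using lp_ray[OF l2(1)] .
      show "ray E r2" using bd_mem_ray[OF tP(2) r2(1)] .
      show "lp l2 0 = (h \<circ> lp l0) 0" using l2(2) tB(3) unfolding lp_def by simp
      show "r2 0 = (h \<circ> lp l0) n" using r2(2) unfolding lp_def by simp
      show "r2 1 = (h \<circ> lp l0) (Suc n)" using r2(3) unfolding lp_def by simp
      show "(lp l2, r2) \<in> ray_equiv E" using bd_rel[OF tP(2) l2(4) r2(1)] .
    qed
    define l3 where "l3 = inv h \<circ> l2"
    have ihA: "inv h \<in> Aut E" using Aut_inv[OF hA] .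
    have ihh: "inv h (h z) = z" for z using inv_f_f[OF bij_is_inj[OF Aut_bij[OF hA]]] .
    have l3: "bi_line E l3" unfolding l3_def using Aut_line[OF ihA l2(1)] .
    have l30: "l3 0 = l0 0" unfolding l3_def using l2(2) tB(3) ihh by simp
    have l3agree: "\<forall>i. \<bar>i\<bar> \<le> int n + 1 \<longrightarrow> l3 i = l0 i"
    proof (intro allI impI)
      fix i :: int assume i: "\<bar>i\<bar> \<le> int n + 1"
      show "l3 i = l0 i"
      proof (cases "i \<ge> 0")
        case True
        define j where "j = nat i"
        have j: "i = int j" "j \<le> Suc n" unfolding j_def using True i by auto
        then have "l2 (int j) = h (l0 (int j))" using a2 unfolding lp_def by auto
        then show ?thesis unfolding l3_def using j ihh by simp
      next
        case False
        define j where "j = nat (- i)"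
        have j: "i = - int j" "j \<le> Suc n" unfolding j_def using False i by auto
        then have "l2 (- int j) = h (l0 (- int j))" using a1 unfolding lm_def by auto
        then show ?thesis unfolding l3_def using j ihh by simp
      qed
    qed
    obtain k where k: "k \<in> Aut E" "\<forall>i. k (l0 i) = l3 i"
      "(l3 0 = l0 0 \<and> (\<forall>i. \<bar>i\<bar> \<le> int n + 1 \<longrightarrow> l3 i = l0 i)) \<longrightarrow> (\<forall>u. length (pth (l0 0) u) \<le> n + 1 \<longrightarrow> k u = u)"
      using line_map[OF l0 l3, of n] by blast
    have kfix: "\<forall>u. length (pth (l0 0) u) \<le> n + 1 \<longrightarrow> k u = u" using k(3) l30 l3agree by blast
    define h' where "h' = h \<circ> k"
    have h'A: "h' \<in> Aut E" unfolding h'_def using Aut_comp[OF hA k(1)] .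
    have "h' \<in> basic h F" unfolding basic_def h'_def using h'A[unfolded h'_def] kfix nF by fastforce
    then have h'U: "h' \<in> U" using F(2) by blast
    have "h' \<circ> l0 = l2"
    proof
      fix i show "(h' \<circ> l0) i = l2 i" unfolding h'_def using k(2) Aut_inv_r[OF hA] unfolding l3_def
        by (metis comp_apply id_apply)
    qed
    then have "Phi h' = (cls (lm l2), cls (lp l2), l2 0)" using Phi_eq[OF h'A] by (metis comp_apply)
    also have "\<dots> = t" using bd_eq_cls[OF tP(1) l2(3)] bd_eq_cls[OF tP(2) l2(4)] l2(2) t' by simp
    finally show "t \<in> Phi ` U" using h'U by blast
  qed
  show "\<exists>T. openin (P_top E) T \<and> p \<in> T \<and> T \<subseteq> Phi ` U" using oT pT TU by blast
qed

end

theorem proposition2p5: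
  fixes q :: nat and E :: "'v \<Rightarrow> 'v \<Rightarrow> bool" and v0 :: 'v
    and \<omega>m \<omega>p :: "(nat \<Rightarrow> 'v) set"
  assumes "q \<ge> 2" and "regular_tree q E"
    and "\<omega>m \<in> boundary E" and "\<omega>p \<in> boundary E" and "\<omega>m \<noteq> \<omega>p"
    and "v0 \<in> geod E \<omega>m \<omega>p"
  shows "homeomorphic_map (GmodM_top E \<omega>m \<omega>p) (P_top E) (psi (Aut E) v0 \<omega>m \<omega>p)"
proof -
  interpret R: rtree q E by (rule rtree.intro) (rule assms(2))
  obtain l0 where l0: "bi_line E l0" "l0 0 = v0" "R.lm l0 \<in> \<omega>m" "R.lp l0 \<in> \<omega>p"
    using R.geod_line[OF assms(3,4,6)] by blast
  have wm: "\<omega>m = R.cls (R.lm l0)" using R.bd_eq_cls[OF assms(3) l0(3)] .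
  have wp: "\<omega>p = R.cls (R.lp l0)" using R.bd_eq_cls[OF assms(4) l0(4)] .
  have st: "setting q E l0"
    by (intro setting.intro setting_axioms.intro rtree.intro assms(2) l0(1)) (use assms(5) wm wp in simp)
  interpret S: setting q E l0 by (rule st)
  let ?M = "Mgrp E (R.cls (R.lm l0)) (R.cls (R.lp l0))"
  let ?G = "GmodM_top E (R.cls (R.lm l0)) (R.cls (R.lp l0))"
  let ?psi = "psi (Aut E) (l0 0) (R.cls (R.lm l0)) (R.cls (R.lp l0))"
  have tsG: "topspace ?G = (\<lambda>g. lcoset g ?M) ` Aut E"
    unfolding GmodM_top_def topspace_quot R.topspace_Aut_top ..
  have oG: "openin ?G V \<longleftrightarrow> V \<subseteq> (\<lambda>g. lcoset g ?M) ` Aut E \<and> openin (Aut_top E) {g \<in> Aut E. lcoset g ?M \<in> V}" for V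
    unfolding GmodM_top_def openin_quot R.topspace_Aut_top ..
  have pc: "?psi (lcoset g ?M) = S.Phi g" if "g \<in> Aut E" for g using S.psi_coset[OF that] .
  have "homeomorphic_map ?G (P_top E) ?psi"
  proof (rule bijective_open_imp_homeomorphic_map)
    show "continuous_map ?G (P_top E) ?psi"
      unfolding continuous_map_def
    proof (intro conjI allI impI)
      show "?psi \<in> topspace ?G \<rightarrow> topspace (P_top E)"
        unfolding tsG R.topspace_P_top using pc S.Phi_Pset by auto
      fix W assume W: "openin (P_top E) W"
      have eq: "{g \<in> Aut E. lcoset g ?M \<in> {C \<in> topspace ?G. ?psi C \<in> W}} = {g \<in> topspace (Aut_top E). S.Phi g \<in> W}"
        unfolding tsG R.topspace_Aut_top using pc by auto
      have "openin (Aut_top E) {g \<in> topspace (Aut_top E). S.Phi g \<in> W}"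
        using S.cont_Phi W unfolding continuous_map_def by blast
      then show "openin ?G {C \<in> topspace ?G. ?psi C \<in> W}"
        unfolding oG eq unfolding tsG by auto
    qed
    show "open_map ?G (P_top E) ?psi"
      unfolding open_map_def
    proof (intro allI impI)
      fix V assume "openin ?G V"
      then have V: "V \<subseteq> (\<lambda>g. lcoset g ?M) ` Aut E" "openin (Aut_top E) {g \<in> Aut E. lcoset g ?M \<in> V}"
        using oG by auto
      have "?psi ` V = S.Phi ` {g \<in> Aut E. lcoset g ?M \<in> V}"
      proof
        show "?psi ` V \<subseteq> S.Phi ` {g \<in> Aut E. lcoset g ?M \<in> V}"
        proof
          fix p assume "p \<in> ?psi ` V"
          then obtain C where C: "C \<in> V" "p = ?psi C" by blast
          then obtain g where g: "g \<in> Aut E" "C = lcoset g ?M" using V(1) by blast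
          then show "p \<in> S.Phi ` {g \<in> Aut E. lcoset g ?M \<in> V}" using C pc by auto
        qed
        show "S.Phi ` {g \<in> Aut E. lcoset g ?M \<in> V} \<subseteq> ?psi ` V"
        proof
          fix p assume "p \<in> S.Phi ` {g \<in> Aut E. lcoset g ?M \<in> V}"
          then obtain g where g: "g \<in> Aut E" "lcoset g ?M \<in> V" "p = S.Phi g" by blast
          then have "p = ?psi (lcoset g ?M)" using pc by simp
          then show "p \<in> ?psi ` V" using g(2) by blast
        qed
      qed
      then show "openin (P_top E) (?psi ` V)" using S.open_Phi[OF V(2)] by simp
    qed
    show "?psi ` topspace ?G = topspace (P_top E)"
    proof
      show "?psi ` topspace ?G \<subseteq> topspace (P_top E)"
        unfolding tsG R.topspace_P_top using pc S.Phi_Pset by auto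
      show "topspace (P_top E) \<subseteq> ?psi ` topspace ?G"
      proof
        fix p assume "p \<in> topspace (P_top E)"
        then have "p \<in> Pset E" using R.topspace_P_top by simp
        then obtain g where g: "g \<in> Aut E" "S.Phi g = p" using S.Phi_surj by blast
        then have "p = ?psi (lcoset g ?M)" using pc by simp
        then show "p \<in> ?psi ` topspace ?G" unfolding tsG using g(1) by blast
      qed
    qed
    show "inj_on ?psi (topspace ?G)"
    proof (rule inj_onI)
      fix C1 C2 assume C: "C1 \<in> topspace ?G" "C2 \<in> topspace ?G" "?psi C1 = ?psi C2"
      obtain g where g: "g \<in> Aut E" "C1 = lcoset g ?M" using C(1) unfolding tsG by blast
      obtain h where h: "h \<in> Aut E" "C2 = lcoset h ?M" using C(2) unfolding tsG by blast
      have "S.Phi g = S.Phi h" using C(3) g h pc by simp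
      then have "inv h \<circ> g \<in> ?M" using S.Phi_inj g(1) h(1) by blast
      then show "C1 = C2" using S.coset_eq g h by simp
    qed
  qed
  then show ?thesis unfolding wm wp l0(2)[symmetric] .
qed

end
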